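(* Let $(E,|\cdot|)$ be a separable Banach space and $p\ge1$, and let $\mathcal C_0^{p\text{-var}}(\mathcal S_2^T;E)$ be the space of continuous maps $G:\mathcal S_2^T\to E$ with $G_{t,t}=0$ for all $t\in[0,T]$ and finite $p$-variation $\|G\|^p_{[0,T],p\text{-var}}=\sup_{0=t_0<t_1<\dots<t_N=T}\sum_{i=0}^{N-1}|G_{t_i,t_{i+1}}|^p<\infty$. For each $n\ge0$ let $Z^n=(Z^n_{s,t})_{(s,t)\in\mathcal S_2^T}$ be a process on $(\Omega_n,\mathcal F_n,\mathbb P_n)$ with trajectories in $\mathcal C_0^{p\text{-var}}(\mathcal S_2^T;E)$. Assume that the family of laws $(\mathbb P_n\circ(Z^n)^{-1})_{n\ge0}$ is tight in $C(\mathcal S_2^T;E)$ and that the family of laws $(\mathbb P_n\circ(\|Z^n\|_{[0,T],p\text{-var}})^{-1})_{n\ge0}$ is tight in $\mathbb R$. Then for any $p'>p$, the family of laws of $\mathcal S_2^T\ni(s,t)\mapsto\|Z^n\|_{[s,t],p'\text{-var}}\in\mathbb R$, $n\ge0$, is tight in $C(\mathcal S_2^T;\mathbb R)$; in particular, for any $\varepsilon>0$ there exists $\delta>0$ such that for all $n$, $$\mathbb P_n\Big(\sup_{(s,t)\in\mathcal S_2^T:\,t-s\le\delta}\|Z^n\|_{[s,t],p'\text{-var}}>\varepsilon\Big)<\varepsilon.$$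
   Context: $\mathcal S_2^T=\{(s,t)\in[0,T]^2:s\le t\}$; $\|G\|^{p'}_{[s,t],p'\text{-var}}=\sup\sum_i|G_{t_{i-1},t_i}|^{p'}$ over partitions $s=t_0<\dots<t_N=t$ of $[s,t]$. *)

theory Defs
  imports "HOL-Analysis.Analysis" "HOL-Probability.Probability"
begin

definition simplex2 :: "real \<Rightarrow> (real \<times> real) set" where
  "simplex2 T = {(s, t). 0 \<le> s \<and> s \<le> t \<and> t \<le> T}"

definition pvar_sums :: "real \<Rightarrow> (real \<times> real \<Rightarrow> 'e::real_normed_vector) \<Rightarrow> real \<Rightarrow> real \<Rightarrow> real set" where
  "pvar_sums p G s t =
     {(\<Sum>i<N. norm (G (u i, u (Suc i))) powr p) | u N.
        u 0 = s \<and> u N = t \<and> (\<forall>i<N. u i < u (Suc i))}"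

definition finite_pvar :: "real \<Rightarrow> (real \<times> real \<Rightarrow> 'e::real_normed_vector) \<Rightarrow> real \<Rightarrow> real \<Rightarrow> bool" where
  "finite_pvar p G s t \<longleftrightarrow> bdd_above (pvar_sums p G s t)"

definition pvar_norm :: "real \<Rightarrow> (real \<times> real \<Rightarrow> 'e::real_normed_vector) \<Rightarrow> real \<Rightarrow> real \<Rightarrow> real" where
  "pvar_norm p G s t = (Sup (pvar_sums p G s t)) powr (1 / p)"

text \<open>The metric space C(S;E) with the uniform metric (functions extensional on S).\<close>
definition Cspace :: "(real \<times> real) set \<Rightarrow> ((real \<times> real) \<Rightarrow> 'e::metric_space) metric" where
  "Cspace S = cfunspace (top_of_set S) euclidean_metric"

definition tight_C :: "(nat \<Rightarrow> 'a measure) \<Rightarrow> (real \<times> real) set \<Rightarrow> (nat \<Rightarrow> 'a \<Rightarrow> real \<times> real \<Rightarrow> 'e::metric_space) \<Rightarrow> bool" where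
  "tight_C M S X \<longleftrightarrow>
     (\<forall>\<epsilon>>0. \<exists>K. compactin (mtopology_of (Cspace S)) K \<and>
        (\<forall>n. measure (M n) {\<omega> \<in> space (M n). restrict (X n \<omega>) S \<in> K} \<ge> 1 - \<epsilon>))"

definition tight_R :: "(nat \<Rightarrow> 'a measure) \<Rightarrow> (nat \<Rightarrow> 'a \<Rightarrow> real) \<Rightarrow> bool" where
  "tight_R M Y \<longleftrightarrow>
     (\<forall>\<epsilon>>0. \<exists>K. compact K \<and> (\<forall>n. measure (M n) {\<omega> \<in> space (M n). Y n \<omega> \<in> K} \<ge> 1 - \<epsilon>))"

end

theory Submission
  imports Defs
begin


definition ispart :: "(nat \<Rightarrow> real) \<Rightarrow> nat \<Rightarrow> real \<Rightarrow> real \<Rightarrow> bool" where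
  "ispart u N s t \<longleftrightarrow> u 0 = s \<and> u N = t \<and> (\<forall>i<N. u i < u (Suc i))"

definition psum :: "real \<Rightarrow> (real \<times> real \<Rightarrow> 'e::real_normed_vector) \<Rightarrow> (nat \<Rightarrow> real) \<Rightarrow> nat \<Rightarrow> real" where
  "psum p G u N = (\<Sum>i<N. norm (G (u i, u (Suc i))) powr p)"

lemma pvar_sums_eq: "pvar_sums p G s t = {psum p G u N | u N. ispart u N s t}"
  by (simp add: pvar_sums_def psum_def ispart_def)

lemma ispart_mono:
  assumes "ispart u N s t" "i \<le> j" "j \<le> N"
  shows "u i \<le> u j"
  using assms(2,3)
proof (induction j)
  case 0 then show ?case by simp
next
  case (Suc j)
  show ?case
  proof (cases "i = Suc j")
    case True then show ?thesis by simp
  next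
    case False
    then have "u i \<le> u j" using Suc by simp
    moreover have "u j < u (Suc j)" using assms(1) Suc.prems by (simp add: ispart_def)
    ultimately show ?thesis by simp
  qed
qed

lemma ispart_range:
  assumes "ispart u N s t" "i \<le> N"
  shows "s \<le> u i" "u i \<le> t"
  using ispart_mono[OF assms(1), of 0 i] ispart_mono[OF assms(1), of i N] assms
  by (auto simp: ispart_def)

lemma ispart_le: "ispart u N s t \<Longrightarrow> s \<le> t"
  using ispart_range(1)[of u N s t N] by (simp add: ispart_def)

lemma ispart_N0: "ispart u N s t \<Longrightarrow> s < t \<Longrightarrow> N > 0"
  by (cases N) (auto simp: ispart_def)

lemma ispart_triv: "ispart u N s s \<Longrightarrow> N = 0"
proof (rule ccontr)
  assume a: "ispart u N s s" "N \<noteq> 0"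
  then have "u 0 < u 1" by (auto simp: ispart_def)
  moreover have "u 1 \<le> u N" using ispart_mono[OF a(1), of 1 N] a by simp
  ultimately show False using a by (simp add: ispart_def)
qed

lemma pvar_sums_triv: "pvar_sums p G s s = {0}"
proof -
  have "ispart (\<lambda>_. s) 0 s s" by (simp add: ispart_def)
  moreover have "ispart u N s s \<Longrightarrow> psum p G u N = 0" for u N
    using ispart_triv[of u N s] by (simp add: psum_def)
  ultimately show ?thesis unfolding pvar_sums_eq by force
qed

lemma psum_nonneg: "0 \<le> psum p G u N"
  by (simp add: psum_def sum_nonneg)

lemma ispart_single: "a < b \<Longrightarrow> ispart (\<lambda>i. if i = 0 then a else b) 1 a b"
  by (simp add: ispart_def)

lemma psum_single: "psum p G (\<lambda>i. if i = 0 then a else b) 1 = norm (G (a, b)) powr p"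
  by (simp add: psum_def)

lemma ispart_cons:
  assumes "ispart v M b c" "a < b"
  shows "ispart (\<lambda>i. if i = 0 then a else v (i - 1)) (Suc M) a c"
  using assms by (auto simp: ispart_def less_Suc_eq_0_disj)

lemma psum_cons:
  "psum p G (\<lambda>i. if i = 0 then a else v (i - 1)) (Suc M) = norm (G (a, v 0)) powr p + psum p G v M"
  unfolding psum_def by (subst sum.lessThan_Suc_shift) simp

lemma ispart_snoc:
  assumes "ispart u N a b" "b < c"
  shows "ispart (u(Suc N := c)) (Suc N) a c"
  using assms by (auto simp: ispart_def less_Suc_eq)

lemma psum_snoc:
  "psum p G (u(Suc N := c)) (Suc N) = psum p G u N + norm (G (u N, c)) powr p"
  by (simp add: psum_def)

lemma sum_split_add: "(\<Sum>i<k + m. f i) = (\<Sum>i<k. f i) + (\<Sum>j<m. f (k + j))" for f :: "nat \<Rightarrow> real"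
  by (induction m) auto

lemma sub_bound:
  assumes W: "\<And>x. x \<in> pvar_sums p G 0 T \<Longrightarrow> x \<le> W"
    and st: "0 \<le> s" "s \<le> t" "t \<le> T"
    and x: "x \<in> pvar_sums p G s t"
  shows "x \<le> W"
proof -
  obtain u N where u: "ispart u N s t" and xe: "x = psum p G u N"
    using x by (auto simp: pvar_sums_eq)
  have "\<exists>u' N'. ispart u' N' 0 t \<and> psum p G u N \<le> psum p G u' N'"
  proof (cases "s = 0")
    case True then show ?thesis using u by auto
  next
    case False
    then have "0 < s" using st by simp
    have "u 0 = s" using u by (simp add: ispart_def)
    then show ?thesis using ispart_cons[OF u \<open>0 < s\<close>] psum_cons[of p G 0 u N]
      by (intro exI[of _ "\<lambda>i. if i = 0 then 0 else u (i - 1)"] exI[of _ "Suc N"]) auto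
  qed
  then obtain u' N' where u': "ispart u' N' 0 t" and le1: "psum p G u N \<le> psum p G u' N'" by blast
  have "\<exists>u'' N''. ispart u'' N'' 0 T \<and> psum p G u' N' \<le> psum p G u'' N''"
  proof (cases "t = T")
    case True then show ?thesis using u' by auto
  next
    case False
    then have "t < T" using st by simp
    have "u' N' = t" using u' by (simp add: ispart_def)
    then show ?thesis using ispart_snoc[OF u' \<open>t < T\<close>] psum_snoc[of p G u' N' T]
      by (intro exI[of _ "u'(Suc N' := T)"] exI[of _ "Suc N'"]) auto
  qed
  then obtain u'' N'' where u'': "ispart u'' N'' 0 T" and le2: "psum p G u' N' \<le> psum p G u'' N''" by blast
  have "psum p G u'' N'' \<le> W" using W u'' by (auto simp: pvar_sums_eq)
  then show ?thesis using xe le1 le2 by simp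
qed

lemma powr_interp:
  fixes x c p p' :: real
  assumes "0 \<le> x" "x \<le> c" "p \<le> p'" "0 < p"
  shows "x powr p' \<le> c powr (p' - p) * x powr p"
proof (cases "x = 0")
  case True then show ?thesis using assms by simp
next
  case False
  then have "x > 0" using assms by simp
  have "x powr p' = x powr (p' - p) * x powr p" by (simp add: powr_add[symmetric])
  also have "\<dots> \<le> c powr (p' - p) * x powr p"
    using assms \<open>x > 0\<close> by (intro mult_right_mono powr_mono2) auto
  finally show ?thesis .
qed

lemma psum_interp:
  assumes "\<And>i. i < N \<Longrightarrow> norm (G (u i, u (Suc i))) \<le> c" "p \<le> p'" "0 < p"
  shows "psum p' G u N \<le> c powr (p' - p) * psum p G u N"
  unfolding psum_def sum_distrib_left
  by (rule sum_mono) (use assms in \<open>auto intro: powr_interp\<close>)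

lemma dist_pair_fst: "dist (a, b) (c, b) = dist a c" for a b c :: real
  by (simp add: dist_Pair_Pair)

lemma dist_pair_snd: "dist (a, b) (a, c) = dist b c" for a b c :: real
  by (simp add: dist_Pair_Pair)

lemma left_move:
  fixes G :: "real \<times> real \<Rightarrow> 'e::real_normed_vector"
  assumes u: "ispart u N s t" and st: "0 \<le> s" "s \<le> s'" "s' < t" "t \<le> T" "s' - s \<le> h"
    and Hc: "\<And>a b. 0 \<le> a \<Longrightarrow> a \<le> b \<Longrightarrow> b \<le> T \<Longrightarrow> b - a \<le> h \<Longrightarrow> norm (G (a,b)) \<le> c"
    and Hd: "\<And>x y. x \<in> simplex2 T \<Longrightarrow> y \<in> simplex2 T \<Longrightarrow> dist x y \<le> h \<Longrightarrow>
                 \<bar>norm (G x) powr p' - norm (G y) powr p'\<bar> \<le> d"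
    and W: "psum p G u N \<le> W" and c: "c \<ge> 0" and pp: "p \<le> p'" "0 < p"
  shows "\<exists>y \<in> pvar_sums p' G s' t. psum p' G u N \<le> c powr (p' - p) * W + d + y"
proof -
  define \<phi> where "\<phi> = (\<lambda>q i. norm (G (u i, u (Suc i))) powr q)"
  have "N > 0" using ispart_N0[OF u] st by simp
  define K where "K = {i. i < N \<and> u i \<le> s'}"
  have finK: "finite K" by (simp add: K_def)
  have "0 \<in> K" using u st \<open>N > 0\<close> by (simp add: K_def ispart_def)
  define k where "k = Max K"
  have "k \<in> K" using Max_in[OF finK] \<open>0 \<in> K\<close> unfolding k_def by blast
  then have kN: "k < N" and uk: "u k \<le> s'" by (auto simp: K_def)
  have uk1: "s' < u (Suc k)"
  proof (cases "Suc k < N")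
    case True
    have "Suc k \<notin> K" using Max_ge[OF finK, of "Suc k"] by (auto simp: k_def)
    then show ?thesis using True by (auto simp: K_def)
  next
    case False
    then have "Suc k = N" using kN by simp
    then show ?thesis using u st by (simp add: ispart_def)
  qed
  obtain m where Nm: "N = k + Suc m" using kN by (intro that[of "N - Suc k"]) simp
  define v where "v = (\<lambda>j. if j = 0 then s' else u (k + j))"
  have v: "ispart v (Suc m) s' t"
    unfolding ispart_def
  proof (intro conjI allI impI)
    show "v 0 = s'" by (simp add: v_def)
    show "v (Suc m) = t" using u Nm by (simp add: v_def ispart_def)
    fix j assume j: "j < Suc m"
    show "v j < v (Suc j)"
    proof (cases "j = 0")
      case True then show ?thesis using uk1 by (simp add: v_def)
    next
      case False
      then have "k + j < N" using j Nm by simp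
      then show ?thesis using u False by (simp add: v_def ispart_def)
    qed
  qed
  have psv: "psum p' G v (Suc m) = norm (G (s', u (Suc k))) powr p' + (\<Sum>j<m. \<phi> p' (k + Suc j))"
    unfolding psum_def by (subst sum.lessThan_Suc_shift) (simp add: v_def \<phi>_def)
  have psu: "psum p' G u N = (\<Sum>i<k. \<phi> p' i) + \<phi> p' k + (\<Sum>j<m. \<phi> p' (k + Suc j))"
    unfolding psum_def Nm sum_split_add by (subst sum.lessThan_Suc_shift) (simp add: \<phi>_def)
  have pre: "(\<Sum>i<k. \<phi> p' i) \<le> c powr (p' - p) * W"
  proof -
    have "(\<Sum>i<k. \<phi> p' i) \<le> (\<Sum>i<k. c powr (p' - p) * \<phi> p i)"
    proof (rule sum_mono)
      fix i assume "i \<in> {..<k}"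
      then have ik: "i < k" by simp
      have a: "s \<le> u i" "u (Suc i) \<le> u k" "u (Suc i) \<le> t" "u i \<le> u (Suc i)"
        using ispart_range[OF u, of i] ispart_mono[OF u, of "Suc i" k] ispart_range[OF u, of "Suc i"]
          ispart_mono[OF u, of i "Suc i"] ik kN by auto
      have "norm (G (u i, u (Suc i))) \<le> c"
        by (rule Hc) (use a st uk in auto)
      then show "\<phi> p' i \<le> c powr (p' - p) * \<phi> p i"
        unfolding \<phi>_def using pp by (intro powr_interp) auto
    qed
    also have "\<dots> = c powr (p' - p) * (\<Sum>i<k. \<phi> p i)" by (simp add: sum_distrib_left)
    also have "\<dots> \<le> c powr (p' - p) * psum p G u N"
    proof (intro mult_left_mono)
      show "(\<Sum>i<k. \<phi> p i) \<le> psum p G u N"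
        unfolding psum_def \<phi>_def using kN by (intro sum_mono2) auto
    qed simp
    also have "\<dots> \<le> c powr (p' - p) * W" using W by (intro mult_left_mono) auto
    finally show ?thesis .
  qed
  have mid: "\<phi> p' k \<le> norm (G (s', u (Suc k))) powr p' + d"
  proof -
    have a: "s \<le> u k" "u (Suc k) \<le> t"
      using ispart_range[OF u, of k] ispart_range[OF u, of "Suc k"] kN by auto
    have "\<bar>norm (G (u k, u (Suc k))) powr p' - norm (G (s', u (Suc k))) powr p'\<bar> \<le> d"
      by (rule Hd) (use a st uk uk1 in \<open>auto simp: simplex2_def dist_pair_fst dist_real_def\<close>)
    then show ?thesis by (simp add: \<phi>_def)
  qed
  have "psum p' G u N \<le> c powr (p' - p) * W + d + psum p' G v (Suc m)"
    using psu psv pre mid by simp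
  moreover have "psum p' G v (Suc m) \<in> pvar_sums p' G s' t"
    using v by (auto simp: pvar_sums_eq)
  ultimately show ?thesis by blast
qed


lemma right_move:
  fixes G :: "real \<times> real \<Rightarrow> 'e::real_normed_vector"
  assumes u: "ispart u N s t" and st: "0 \<le> s" "s < t'" "t' \<le> t" "t \<le> T" "t - t' \<le> h"
    and Hc: "\<And>a b. 0 \<le> a \<Longrightarrow> a \<le> b \<Longrightarrow> b \<le> T \<Longrightarrow> b - a \<le> h \<Longrightarrow> norm (G (a,b)) \<le> c"
    and Hd: "\<And>x y. x \<in> simplex2 T \<Longrightarrow> y \<in> simplex2 T \<Longrightarrow> dist x y \<le> h \<Longrightarrow>
                 \<bar>norm (G x) powr p' - norm (G y) powr p'\<bar> \<le> d"
    and W: "psum p G u N \<le> W" and c: "c \<ge> 0" and pp: "p \<le> p'" "0 < p"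
  shows "\<exists>y \<in> pvar_sums p' G s t'. psum p' G u N \<le> c powr (p' - p) * W + d + y"
proof -
  define \<phi> where "\<phi> = (\<lambda>q i. norm (G (u i, u (Suc i))) powr q)"
  define K where "K = {i. i \<le> N \<and> t' \<le> u i}"
  have finK: "finite K" by (simp add: K_def)
  have "N \<in> K" using u st by (simp add: K_def ispart_def)
  define k where "k = Min K"
  have "k \<in> K" using Min_in[OF finK] \<open>N \<in> K\<close> unfolding k_def by blast
  then have kN: "k \<le> N" and uk: "t' \<le> u k" by (auto simp: K_def)
  have "k \<noteq> 0"
  proof
    assume "k = 0" then show False using uk u st by (simp add: ispart_def)
  qed
  then obtain k' where kk: "k = Suc k'" using not0_implies_Suc by blast
  have uk': "u k' < t'"
  proof (rule ccontr)
    assume "\<not> u k' < t'"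
    then have "k' \<in> K" using kN kk by (auto simp: K_def)
    then have "k \<le> k'" using Min_le[OF finK] unfolding k_def by blast
    then show False using kk by simp
  qed
  obtain m where Nm: "N = Suc k' + m" using kN kk by (intro that[of "N - Suc k'"]) simp
  define v where "v = u(Suc k' := t')"
  have v: "ispart v (Suc k') s t'"
    unfolding ispart_def
  proof (intro conjI allI impI)
    show "v 0 = s" using u by (simp add: v_def ispart_def)
    show "v (Suc k') = t'" by (simp add: v_def)
    fix i assume i: "i < Suc k'"
    show "v i < v (Suc i)"
    proof (cases "i = k'")
      case True then show ?thesis using uk' by (simp add: v_def)
    next
      case False
      then have "i < N" "i \<noteq> Suc k'" "Suc i \<noteq> Suc k'" using i Nm by auto
      then show ?thesis using u by (simp add: v_def ispart_def)
    qed
  qed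
  have psv: "psum p' G v (Suc k') = (\<Sum>i<k'. \<phi> p' i) + norm (G (u k', t')) powr p'"
  proof -
    have "(\<Sum>i<k'. norm (G (v i, v (Suc i))) powr p') = (\<Sum>i<k'. \<phi> p' i)"
      by (rule sum.cong) (auto simp: v_def \<phi>_def)
    moreover have "v k' = u k'" by (simp add: v_def)
    ultimately show ?thesis unfolding psum_def by (simp add: v_def)
  qed
  have psu: "psum p' G u N = (\<Sum>i<k'. \<phi> p' i) + \<phi> p' k' + (\<Sum>j<m. \<phi> p' (Suc k' + j))"
    unfolding psum_def Nm sum_split_add by (simp add: \<phi>_def)
  have suf: "(\<Sum>j<m. \<phi> p' (Suc k' + j)) \<le> c powr (p' - p) * W"
  proof -
    have "(\<Sum>j<m. \<phi> p' (Suc k' + j)) \<le> (\<Sum>j<m. c powr (p' - p) * \<phi> p (Suc k' + j))"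
    proof (rule sum_mono)
      fix j assume "j \<in> {..<m}"
      then have jm: "j < m" by simp
      define i where "i = Suc k' + j"
      have iN: "i < N" using jm Nm by (simp add: i_def)
      have a: "u k \<le> u i" "u (Suc i) \<le> t" "u i \<le> u (Suc i)"
        using ispart_mono[OF u, of k i] ispart_range[OF u, of "Suc i"]
          ispart_mono[OF u, of i "Suc i"] iN kk by (auto simp: i_def)
      have "norm (G (u i, u (Suc i))) \<le> c"
        by (rule Hc) (use a st uk ispart_range[OF u, of i] iN in auto)
      then show "\<phi> p' (Suc k' + j) \<le> c powr (p' - p) * \<phi> p (Suc k' + j)"
        unfolding \<phi>_def i_def[symmetric] using pp by (intro powr_interp) auto
    qed
    also have "\<dots> = c powr (p' - p) * (\<Sum>j<m. \<phi> p (Suc k' + j))" by (simp add: sum_distrib_left)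
    also have "\<dots> \<le> c powr (p' - p) * psum p G u N"
    proof (intro mult_left_mono)
      have "psum p G u N = (\<Sum>i<Suc k'. \<phi> p i) + (\<Sum>j<m. \<phi> p (Suc k' + j))"
        unfolding psum_def Nm sum_split_add by (simp add: \<phi>_def)
      moreover have "0 \<le> (\<Sum>i<Suc k'. \<phi> p i)" by (simp add: \<phi>_def sum_nonneg)
      ultimately show "(\<Sum>j<m. \<phi> p (Suc k' + j)) \<le> psum p G u N" by simp
    qed simp
    also have "\<dots> \<le> c powr (p' - p) * W" using W by (intro mult_left_mono) auto
    finally show ?thesis .
  qed
  have mid: "\<phi> p' k' \<le> norm (G (u k', t')) powr p' + d"
  proof -
    have a: "s \<le> u k'" "u k \<le> t"
      using ispart_range[OF u, of k'] ispart_range[OF u, of k] kN kk by auto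
    have "\<bar>norm (G (u k', u k)) powr p' - norm (G (u k', t')) powr p'\<bar> \<le> d"
      by (rule Hd) (use a st uk uk' in \<open>auto simp: simplex2_def dist_pair_snd dist_real_def\<close>)
    then show ?thesis by (simp add: \<phi>_def kk)
  qed
  have "psum p' G u N \<le> c powr (p' - p) * W + d + psum p' G v (Suc k')"
    using psu psv suf mid by simp
  moreover have "psum p' G v (Suc k') \<in> pvar_sums p' G s t'"
    using v by (auto simp: pvar_sums_eq)
  ultimately show ?thesis by blast
qed


definition VQ :: "real \<Rightarrow> (real \<times> real \<Rightarrow> 'e::real_normed_vector) \<Rightarrow> real \<Rightarrow> real \<Rightarrow> real" where
  "VQ q G s t = Sup (pvar_sums q G s t)"

locale detset =
  fixes G :: "real \<times> real \<Rightarrow> 'e::real_normed_vector" and T p p' B W :: real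
  assumes pp: "0 < p" "p \<le> p'"
    and Bnd: "\<And>x. x \<in> simplex2 T \<Longrightarrow> norm (G x) \<le> B"
    and Wb: "\<And>x. x \<in> pvar_sums p G 0 T \<Longrightarrow> x \<le> W"
begin

lemma psum_W:
  assumes u: "ispart u N s t" and "0 \<le> s" "t \<le> T" shows "psum p G u N \<le> W"
proof -
  have mem: "psum p G u N \<in> pvar_sums p G s t" unfolding pvar_sums_eq using u by blast
  show ?thesis using sub_bound[OF Wb _ _ _ mem] ispart_le[OF u] assms by auto
qed

lemma B_nonneg: "0 \<le> T \<Longrightarrow> 0 \<le> B"
  using Bnd[of "(0,0)"] by (auto simp: simplex2_def intro: order_trans[OF norm_ge_zero])

lemma sums_bound:
  assumes st: "0 \<le> s" "s \<le> t" "t \<le> T" and y: "y \<in> pvar_sums p' G s t"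
  shows "y \<le> B powr (p' - p) * W"
proof -
  obtain u N where u: "ispart u N s t" and ye: "y = psum p' G u N"
    using y by (auto simp: pvar_sums_eq)
  have "y \<le> B powr (p' - p) * psum p G u N"
    unfolding ye
  proof (rule psum_interp[OF _ pp(2) pp(1)])
    fix i assume "i < N"
    then show "norm (G (u i, u (Suc i))) \<le> B"
      using ispart_range[OF u, of i] ispart_range[OF u, of "Suc i"] ispart_mono[OF u, of i "Suc i"] st
      by (intro Bnd) (auto simp: simplex2_def)
  qed
  also have "\<dots> \<le> B powr (p' - p) * W"
    using psum_W[OF u] st by (intro mult_left_mono) auto
  finally show ?thesis .
qed

lemma sums_nonempty:
  assumes "s \<le> t" shows "\<exists>y. y \<in> pvar_sums q G s t"
proof (cases "s = t")
  case True then show ?thesis by (simp add: pvar_sums_triv)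
next
  case False
  then have "s < t" using assms by simp
  then show ?thesis using ispart_single[of s t] by (auto simp: pvar_sums_eq)
qed

lemma sums_bdd:
  assumes "0 \<le> s" "s \<le> t" "t \<le> T" shows "bdd_above (pvar_sums p' G s t)"
  by (rule bdd_aboveI[where M="B powr (p' - p) * W"]) (rule sums_bound[OF assms])

lemma VQ_nonneg:
  assumes "0 \<le> s" "s \<le> t" "t \<le> T" shows "0 \<le> VQ p' G s t"
proof -
  obtain y where y: "y \<in> pvar_sums p' G s t" using sums_nonempty assms by blast
  then have "0 \<le> y" by (auto simp: pvar_sums_eq psum_nonneg)
  also have "y \<le> VQ p' G s t" unfolding VQ_def using y sums_bdd[OF assms] by (rule cSup_upper)
  finally show ?thesis .
qed

lemma VQ_bound:
  assumes "0 \<le> s" "s \<le> t" "t \<le> T" shows "VQ p' G s t \<le> B powr (p' - p) * W"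
  unfolding VQ_def using sums_nonempty[OF assms(2)] sums_bound[OF assms]
  by (intro cSup_least) auto

lemma VQ_left_lower:
  assumes "0 \<le> s" "s \<le> s'" "s' \<le> t" "t \<le> T"
  shows "VQ p' G s' t \<le> VQ p' G s t"
proof (cases "s = s'")
  case True then show ?thesis by simp
next
  case False
  then have ss: "s < s'" using assms by simp
  show ?thesis unfolding VQ_def
  proof (rule cSup_mono)
    show "pvar_sums p' G s' t \<noteq> {}" using sums_nonempty[OF assms(3)] by blast
    show "bdd_above (pvar_sums p' G s t)" using assms by (intro sums_bdd) auto
    fix y assume "y \<in> pvar_sums p' G s' t"
    then obtain v M where v: "ispart v M s' t" and ye: "y = psum p' G v M"
      by (auto simp: pvar_sums_eq)
    have "v 0 = s'" using v by (simp add: ispart_def)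
    have "psum p' G (\<lambda>i. if i = 0 then s else v (i - 1)) (Suc M) \<in> pvar_sums p' G s t"
      unfolding pvar_sums_eq using ispart_cons[OF v ss] by blast
    moreover have "y \<le> psum p' G (\<lambda>i. if i = 0 then s else v (i - 1)) (Suc M)"
      using psum_cons[of p' G s v M] ye by simp
    ultimately show "\<exists>x\<in>pvar_sums p' G s t. y \<le> x" by blast
  qed
qed

lemma VQ_right_lower:
  assumes "0 \<le> s" "s \<le> t'" "t' \<le> t" "t \<le> T"
  shows "VQ p' G s t' \<le> VQ p' G s t"
proof (cases "t = t'")
  case True then show ?thesis by simp
next
  case False
  then have tt: "t' < t" using assms by simp
  show ?thesis unfolding VQ_def
  proof (rule cSup_mono)
    show "pvar_sums p' G s t' \<noteq> {}" using sums_nonempty[OF assms(2)] by blast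
    show "bdd_above (pvar_sums p' G s t)" using assms by (intro sums_bdd) auto
    fix y assume "y \<in> pvar_sums p' G s t'"
    then obtain v M where v: "ispart v M s t'" and ye: "y = psum p' G v M"
      by (auto simp: pvar_sums_eq)
    have "v M = t'" using v by (simp add: ispart_def)
    have "psum p' G (v(Suc M := t)) (Suc M) \<in> pvar_sums p' G s t"
      unfolding pvar_sums_eq using ispart_snoc[OF v tt] by blast
    moreover have "y \<le> psum p' G (v(Suc M := t)) (Suc M)"
      using psum_snoc[of p' G v M t] ye by simp
    ultimately show "\<exists>x\<in>pvar_sums p' G s t. y \<le> x" by blast
  qed
qed

context
  fixes h c d :: real
  assumes Hc: "\<And>a b. 0 \<le> a \<Longrightarrow> a \<le> b \<Longrightarrow> b \<le> T \<Longrightarrow> b - a \<le> h \<Longrightarrow> norm (G (a,b)) \<le> c"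
    and Hd: "\<And>x y. x \<in> simplex2 T \<Longrightarrow> y \<in> simplex2 T \<Longrightarrow> dist x y \<le> h \<Longrightarrow>
                 \<bar>norm (G x) powr p' - norm (G y) powr p'\<bar> \<le> d"
    and cd: "0 \<le> c" "0 \<le> d"
begin

lemma short_bound:
  assumes u: "ispart u N s t" and st: "0 \<le> s" "t \<le> T" "t - s \<le> h"
  shows "psum p' G u N \<le> c powr (p' - p) * W + d"
proof -
  have "psum p' G u N \<le> c powr (p' - p) * psum p G u N"
  proof (rule psum_interp[OF _ pp(2) pp(1)])
    fix i assume "i < N"
    then show "norm (G (u i, u (Suc i))) \<le> c"
      using ispart_range[OF u, of i] ispart_range[OF u, of "Suc i"] ispart_mono[OF u, of i "Suc i"] st
      by (intro Hc) auto
  qed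
  also have "\<dots> \<le> c powr (p' - p) * W"
    using psum_W[OF u] st by (intro mult_left_mono) auto
  finally show ?thesis using cd by simp
qed

lemma VQ_left_upper:
  assumes st: "0 \<le> s" "s \<le> s'" "s' \<le> t" "t \<le> T" "s' - s \<le> h"
  shows "VQ p' G s t \<le> VQ p' G s' t + (c powr (p' - p) * W + d)"
  unfolding VQ_def
proof (rule cSup_least)
  show "pvar_sums p' G s t \<noteq> {}" using sums_nonempty[of s t] st by auto
  fix x assume "x \<in> pvar_sums p' G s t"
  then obtain u N where u: "ispart u N s t" and xe: "x = psum p' G u N"
    by (auto simp: pvar_sums_eq)
  show "x \<le> Sup (pvar_sums p' G s' t) + (c powr (p' - p) * W + d)"
  proof (cases "s' = t")
    case True
    then show ?thesis using short_bound[OF u] st xe by (simp add: pvar_sums_triv)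
  next
    case False
    then have "s' < t" using st by simp
    from left_move[OF u st(1,2) this st(4,5) Hc Hd psum_W[OF u] cd(1) pp(2,1)]
    obtain y where y: "y \<in> pvar_sums p' G s' t" and le: "psum p' G u N \<le> c powr (p' - p) * W + d + y"
      using st by auto
    have "y \<le> Sup (pvar_sums p' G s' t)" using y sums_bdd[of s' t] st by (intro cSup_upper) auto
    then show ?thesis using le xe by simp
  qed
qed

lemma VQ_right_upper:
  assumes st: "0 \<le> s" "s \<le> t'" "t' \<le> t" "t \<le> T" "t - t' \<le> h"
  shows "VQ p' G s t \<le> VQ p' G s t' + (c powr (p' - p) * W + d)"
  unfolding VQ_def
proof (rule cSup_least)
  show "pvar_sums p' G s t \<noteq> {}" using sums_nonempty[of s t] st by auto
  fix x assume "x \<in> pvar_sums p' G s t"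
  then obtain u N where u: "ispart u N s t" and xe: "x = psum p' G u N"
    by (auto simp: pvar_sums_eq)
  show "x \<le> Sup (pvar_sums p' G s t') + (c powr (p' - p) * W + d)"
  proof (cases "s = t'")
    case True
    then show ?thesis using short_bound[OF u] st xe by (simp add: pvar_sums_triv)
  next
    case False
    then have "s < t'" using st by simp
    from right_move[OF u st(1) this st(3,4,5) Hc Hd psum_W[OF u] cd(1) pp(2,1)]
    obtain y where y: "y \<in> pvar_sums p' G s t'" and le: "psum p' G u N \<le> c powr (p' - p) * W + d + y"
      using st by auto
    have "y \<le> Sup (pvar_sums p' G s t')" using y sums_bdd[of s t'] st by (intro cSup_upper) auto
    then show ?thesis using le xe by simp
  qed
qed

lemma VQ_left_abs:
  assumes "0 \<le> a" "0 \<le> b" "a \<le> t" "b \<le> t" "t \<le> T" "\<bar>a - b\<bar> \<le> h"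
  shows "\<bar>VQ p' G a t - VQ p' G b t\<bar> \<le> c powr (p' - p) * W + d"
proof (cases "a \<le> b")
  case True
  then show ?thesis using VQ_left_lower[of a b t] VQ_left_upper[of a b t] assms by auto
next
  case False
  then show ?thesis using VQ_left_lower[of b a t] VQ_left_upper[of b a t] assms by auto
qed

lemma VQ_right_abs:
  assumes "0 \<le> s" "s \<le> a" "s \<le> b" "a \<le> T" "b \<le> T" "\<bar>a - b\<bar> \<le> h"
  shows "\<bar>VQ p' G s a - VQ p' G s b\<bar> \<le> c powr (p' - p) * W + d"
proof (cases "a \<le> b")
  case True
  then show ?thesis using VQ_right_lower[of s a b] VQ_right_upper[of s a b] assms by auto
next
  case False
  then show ?thesis using VQ_right_lower[of s b a] VQ_right_upper[of s b a] assms by auto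
qed

lemma VQ_mod:
  assumes x: "x \<in> simplex2 T" and y: "y \<in> simplex2 T" and dxy: "dist x y \<le> h"
  shows "\<bar>VQ p' G (fst x) (snd x) - VQ p' G (fst y) (snd y)\<bar> \<le> 2 * (c powr (p' - p) * W + d)"
proof -
  obtain s t where xe: "x = (s, t)" by (cases x)
  obtain s' t' where ye: "y = (s', t')" by (cases y)
  have S: "0 \<le> s" "s \<le> t" "t \<le> T" "0 \<le> s'" "s' \<le> t'" "t' \<le> T"
    using x y by (auto simp: xe ye simplex2_def)
  have d1: "\<bar>s - s'\<bar> \<le> h" using dist_fst_le[of x y] dxy by (simp add: xe ye dist_real_def)
  have d2: "\<bar>t - t'\<bar> \<le> h" using dist_snd_le[of x y] dxy by (simp add: xe ye dist_real_def)
  show ?thesis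
  proof (cases "s' \<le> t")
    case True
    have "\<bar>VQ p' G s t - VQ p' G s' t\<bar> \<le> c powr (p' - p) * W + d"
      using S True d1 by (intro VQ_left_abs) auto
    moreover have "\<bar>VQ p' G s' t - VQ p' G s' t'\<bar> \<le> c powr (p' - p) * W + d"
      using S True d2 by (intro VQ_right_abs) auto
    ultimately show ?thesis by (simp add: xe ye)
  next
    case False
    have "\<bar>VQ p' G s t - VQ p' G s t'\<bar> \<le> c powr (p' - p) * W + d"
      using S False d2 by (intro VQ_right_abs) auto
    moreover have "\<bar>VQ p' G s t' - VQ p' G s' t'\<bar> \<le> c powr (p' - p) * W + d"
      using S False d1 by (intro VQ_left_abs) auto
    ultimately show ?thesis by (simp add: xe ye)
  qed
qed

end

end


lemma Cspace_mem:
  "f \<in> mspace (Cspace S) \<longleftrightarrow> f \<in> extensional S \<and>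
     Metric_space.mbounded UNIV dist (f ` S) \<and> continuous_on S f"
  by (simp add: Cspace_def)

lemma compactin_S: "compact S \<Longrightarrow> compactin (top_of_set S) (topspace (top_of_set S))"
  by (simp add: compactin_subtopology)

lemma Cspace_dist_lt:
  assumes "compact S" "f \<in> mspace (Cspace S)" "g \<in> mspace (Cspace S)" "mdist (Cspace S) f g < a" "x \<in> S"
  shows "dist (f x) (g x) < a"
  using cfunspace_mdist_lt[OF compactin_S[OF assms(1)], of f euclidean_metric g a x] assms
  by (simp add: Cspace_def)

lemma compact_family:
  fixes K :: "(real \<times> real \<Rightarrow> 'e::real_normed_vector) set"
  assumes S: "compact S" and K: "compactin (mtopology_of (Cspace S)) K"
  shows "\<exists>B. \<forall>f\<in>K. \<forall>x\<in>S. norm (f x) \<le> B"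
    and "\<forall>e>0. \<exists>h>0. \<forall>f\<in>K. \<forall>x\<in>S. \<forall>y\<in>S. dist x y \<le> h \<longrightarrow> dist (f x) (f y) \<le> e"
proof -
  interpret C: Metric_space "mspace (Cspace S)" "mdist (Cspace S)" by simp
  have tb: "C.mtotally_bounded K"
    using K unfolding mtopology_of_def by (rule C.compactin_imp_mtotally_bounded)
  have net: "\<exists>F. finite F \<and> F \<subseteq> K \<and> (\<forall>f\<in>K. \<exists>g\<in>F. g \<in> mspace (Cspace S) \<and> f \<in> mspace (Cspace S) \<and>
                (\<forall>x\<in>S. dist (f x) (g x) < e))" if "e > 0" for e
  proof -
    have "\<exists>F. finite F \<and> F \<subseteq> K \<and> K \<subseteq> (\<Union>x\<in>F. C.mball x e)"
      using tb \<open>e > 0\<close> unfolding C.mtotally_bounded_def by simp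
    then obtain F where F: "finite F" "F \<subseteq> K" "K \<subseteq> (\<Union>x\<in>F. C.mball x e)"
      by (elim exE conjE)
    show ?thesis
    proof (intro exI[of _ F] conjI ballI F(1,2))
      fix f assume "f \<in> K"
      then obtain g where g: "g \<in> F" "f \<in> C.mball g e" using F(3) by blast
      then have gm: "g \<in> mspace (Cspace S)" "f \<in> mspace (Cspace S)" "mdist (Cspace S) g f < e" by auto
      have "\<forall>x\<in>S. dist (f x) (g x) < e"
        using Cspace_dist_lt[OF S gm] by (simp add: dist_commute)
      then show "\<exists>g\<in>F. g \<in> mspace (Cspace S) \<and> f \<in> mspace (Cspace S) \<and> (\<forall>x\<in>S. dist (f x) (g x) < e)"
        using g gm by blast
    qed
  qed
  show "\<exists>B. \<forall>f\<in>K. \<forall>x\<in>S. norm (f x) \<le> B"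
  proof -
    obtain F where F: "finite F" "F \<subseteq> K" and
      Fn: "\<And>f. f \<in> K \<Longrightarrow> \<exists>g\<in>F. g \<in> mspace (Cspace S) \<and> f \<in> mspace (Cspace S) \<and> (\<forall>x\<in>S. dist (f x) (g x) < 1)"
      using net[of 1] by auto
    have "\<forall>g\<in>F. \<exists>b. \<forall>x\<in>S. norm (g x) \<le> b"
    proof
      fix g assume that: "g \<in> F"
      have "g \<in> mspace (Cspace S)"
        using F(2) that compactin_subset_topspace[OF K] by auto
      then have "continuous_on S g" by (simp add: Cspace_mem)
      then have "bounded (g ` S)" using S compact_continuous_image compact_imp_bounded by blast
      then show "\<exists>b. \<forall>x\<in>S. norm (g x) \<le> b" by (auto simp: bounded_iff)
    qed
    from bchoice[OF this] obtain bf where bf0: "\<forall>g\<in>F. \<forall>x\<in>S. norm (g x) \<le> bf g" by blast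
    then have bf: "\<And>g x. g \<in> F \<Longrightarrow> x \<in> S \<Longrightarrow> norm (g x) \<le> bf g" by blast
    define B where "B = (\<Sum>g\<in>F. \<bar>bf g\<bar>) + 1"
    have "norm (f x) \<le> B" if "f \<in> K" "x \<in> S" for f x
    proof -
      obtain g where g: "g \<in> F" "dist (f x) (g x) < 1" using Fn[OF \<open>f \<in> K\<close>] \<open>x \<in> S\<close> by blast
      have "norm (f x) \<le> norm (g x) + dist (f x) (g x)"
        using norm_triangle_sub[of "f x" "g x"] by (simp add: dist_norm)
      also have "\<dots> \<le> \<bar>bf g\<bar> + 1" using bf[OF g(1) \<open>x \<in> S\<close>] g(2) by linarith
      also have "\<bar>bf g\<bar> \<le> (\<Sum>g\<in>F. \<bar>bf g\<bar>)"
        using F(1) g(1) by (intro member_le_sum) auto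
      finally show ?thesis unfolding B_def by linarith
    qed
    then show ?thesis by blast
  qed
  show "\<forall>e>0. \<exists>h>0. \<forall>f\<in>K. \<forall>x\<in>S. \<forall>y\<in>S. dist x y \<le> h \<longrightarrow> dist (f x) (f y) \<le> e"
  proof (intro allI impI)
    fix e :: real assume "e > 0"
    obtain F where F: "finite F" "F \<subseteq> K" and
      Fn: "\<And>f. f \<in> K \<Longrightarrow> \<exists>g\<in>F. g \<in> mspace (Cspace S) \<and> f \<in> mspace (Cspace S) \<and> (\<forall>x\<in>S. dist (f x) (g x) < e/3)"
      using net[of "e/3"] \<open>e > 0\<close> by auto
    have "\<forall>g\<in>F. \<exists>h. h > 0 \<and> (\<forall>x\<in>S. \<forall>y\<in>S. dist x y < h \<longrightarrow> dist (g x) (g y) < e/3)"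
    proof
      fix g assume that: "g \<in> F"
      have "g \<in> mspace (Cspace S)"
        using F(2) that compactin_subset_topspace[OF K] by auto
      then have "continuous_on S g" by (simp add: Cspace_mem)
      then have "uniformly_continuous_on S g" using S by (rule compact_uniformly_continuous)
      moreover have "e/3 > 0" using \<open>e > 0\<close> by simp
      ultimately obtain h where "h > 0" "\<forall>x\<in>S. \<forall>x'\<in>S. dist x' x < h \<longrightarrow> dist (g x') (g x) < e/3"
        unfolding uniformly_continuous_on_def by blast
      then show "\<exists>h. h > 0 \<and> (\<forall>x\<in>S. \<forall>y\<in>S. dist x y < h \<longrightarrow> dist (g x) (g y) < e/3)"
        by blast
    qed
    from bchoice[OF this] obtain hf where hf0: "\<forall>g\<in>F. hf g > 0 \<and>
        (\<forall>x\<in>S. \<forall>y\<in>S. dist x y < hf g \<longrightarrow> dist (g x) (g y) < e/3)" by blast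
    then have hf: "\<And>g. g \<in> F \<Longrightarrow> hf g > 0"
      "\<And>g x y. g \<in> F \<Longrightarrow> x \<in> S \<Longrightarrow> y \<in> S \<Longrightarrow> dist x y < hf g \<Longrightarrow> dist (g x) (g y) < e/3"
      by blast+
    define h where "h = Min (insert 1 (hf ` F)) / 2"
    have "0 < Min (insert 1 (hf ` F))" using F(1) hf(1) by (subst Min_gr_iff) auto
    then have hpos: "h > 0" unfolding h_def by simp
    have hle: "h < hf g" if "g \<in> F" for g
    proof -
      have "Min (insert 1 (hf ` F)) \<le> hf g" using F(1) that by (intro Min_le) auto
      then show ?thesis using hf(1)[OF that] unfolding h_def by linarith
    qed
    show "\<exists>h>0. \<forall>f\<in>K. \<forall>x\<in>S. \<forall>y\<in>S. dist x y \<le> h \<longrightarrow> dist (f x) (f y) \<le> e"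
    proof (intro exI[of _ h] conjI hpos ballI impI)
      fix f x y assume f: "f \<in> K" and xy: "x \<in> S" "y \<in> S" "dist x y \<le> h"
      obtain g where g: "g \<in> F" "\<forall>x\<in>S. dist (f x) (g x) < e/3" using Fn[OF f] by blast
      have "dist (f x) (f y) \<le> dist (f x) (g x) + dist (g x) (g y) + dist (g y) (f y)"
        using dist_triangle[of "f x" "f y" "g x"] dist_triangle[of "g x" "f y" "g y"] by linarith
      also have "\<dots> < e/3 + e/3 + e/3"
        using g xy hf(2)[OF g(1) xy(1,2)] hle[OF g(1)] by (intro add_strict_mono) (auto simp: dist_commute)
      finally show "dist (f x) (f y) \<le> e" by simp
    qed
  qed
qed


lemma compact_simplex: "compact (simplex2 T)"
proof -
  have "simplex2 T = {x. fst x \<le> snd x} \<inter> ({0..T} \<times> {0..T})"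
    by (auto simp: simplex2_def)
  moreover have "closed {x::real\<times>real. fst x \<le> snd x}"
    by (intro closed_Collect_le continuous_intros)
  moreover have "compact ({0..T} \<times> {0..T::real})" by (intro compact_Times compact_Icc)
  ultimately show ?thesis by (simp add: closed_Int_compact)
qed

definition rpart :: "real \<Rightarrow> real \<Rightarrow> rat list \<Rightarrow> nat \<Rightarrow> real" where
  "rpart s t qs i = (if i = 0 then s else if i \<le> length qs then real_of_rat (qs ! (i - 1)) else t)"

lemma dist_pair_le: "dist (a, b) (c, d) \<le> \<bar>a - c\<bar> + \<bar>b - d\<bar>" for a b c d :: real
proof -
  have "dist (a, b) (c, d) \<le> dist (a, b) (c, b) + dist (c, b) (c, d)" by (rule dist_triangle)
  also have "\<dots> = \<bar>a - c\<bar> + \<bar>b - d\<bar>" by (simp add: dist_pair_fst dist_pair_snd dist_real_def)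
  finally show ?thesis .
qed

lemma approx_rat:
  fixes G :: "real \<times> real \<Rightarrow> 'e::real_normed_vector"
  assumes u: "ispart u N s t" and st: "0 \<le> s" "s < t" "t \<le> T"
    and cont: "continuous_on (simplex2 T) G" and q: "q > 0" and e: "e > 0"
  shows "\<exists>qs. ispart (rpart s t qs) (Suc (length qs)) s t \<and>
             psum q G u N \<le> psum q G (rpart s t qs) (Suc (length qs)) + e"
proof -
  have "N > 0" using ispart_N0[OF u st(2)] .
  then obtain n where Nn: "N = Suc n" using not0_implies_Suc by blast
  define \<phi> where "\<phi> = (\<lambda>x. norm (G x) powr q)"
  have "continuous_on (simplex2 T) \<phi>"
    unfolding \<phi>_def using q by (intro continuous_on_powr' continuous_on_norm cont continuous_on_const) auto
  then have "uniformly_continuous_on (simplex2 T) \<phi>" using compact_simplex[of T]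
    by (rule compact_uniformly_continuous)
  moreover have "e / N > 0" using e \<open>N > 0\<close> by simp
  ultimately obtain \<eta> where \<eta>: "\<eta> > 0"
    "\<forall>x\<in>simplex2 T. \<forall>x'\<in>simplex2 T. dist x' x < \<eta> \<longrightarrow> dist (\<phi> x') (\<phi> x) < e / N"
    unfolding uniformly_continuous_on_def by blast
  define g0 where "g0 = Min ((\<lambda>i. u (Suc i) - u i) ` {..<N})"
  have g0pos: "g0 > 0" unfolding g0_def using u \<open>N > 0\<close> by (subst Min_gr_iff) (auto simp: ispart_def)
  have g0le: "g0 \<le> u (Suc i) - u i" if "i < N" for i unfolding g0_def using that by (intro Min_le) auto
  define \<rho> where "\<rho> = min (\<eta> / 2) (g0 / 2)"
  have \<rho>: "\<rho> > 0" using \<eta>(1) g0pos by (simp add: \<rho>_def)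
  have "\<forall>i. \<exists>r::rat. \<bar>real_of_rat r - u i\<bar> < \<rho>"
  proof
    fix i
    obtain r where r: "r \<in> \<rat>" "u i - \<rho> < r" "r < u i + \<rho>"
      using Rats_dense_in_real[of "u i - \<rho>" "u i + \<rho>"] \<rho> by auto
    from r(1) obtain r' where "r = real_of_rat r'" by (cases rule: Rats_cases) auto
    then show "\<exists>r::rat. \<bar>real_of_rat r - u i\<bar> < \<rho>" using r by (intro exI[of _ r']) auto
  qed
  then obtain rf where rf: "\<And>i. \<bar>real_of_rat (rf i) - u i\<bar> < \<rho>" by metis
  define qs where "qs = map (\<lambda>i. rf (Suc i)) [0..<n]"
  define w where "w = rpart s t qs"
  have lq: "length qs = n" by (simp add: qs_def)
  have wclose: "\<bar>w i - u i\<bar> < \<rho>" if iN: "i \<le> N" for i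
  proof -
    consider "i = 0" | "0 < i" "i \<le> n" | "i = Suc n" using iN Nn by linarith
    then show ?thesis
    proof cases
      case 1 then show ?thesis using u \<rho> by (simp add: w_def rpart_def ispart_def)
    next
      case 2
      then have "[0..<n] ! (i - 1) = i - 1" by simp
      then have "qs ! (i - 1) = rf i" using 2 by (simp add: qs_def)
      then have "w i = real_of_rat (rf i)"
        using 2 by (simp add: w_def rpart_def lq)
      then show ?thesis using rf[of i] by simp
    next
      case 3 then show ?thesis using u \<rho> Nn by (simp add: w_def rpart_def lq ispart_def)
    qed
  qed
  have w: "ispart w (Suc n) s t"
    unfolding ispart_def
  proof (intro conjI allI impI)
    show "w 0 = s" by (simp add: w_def rpart_def)
    show "w (Suc n) = t" by (simp add: w_def rpart_def lq)
    fix i assume i: "i < Suc n"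
    have "\<bar>w i - u i\<bar> < \<rho>" "\<bar>w (Suc i) - u (Suc i)\<bar> < \<rho>" using wclose i Nn by auto
    moreover have "g0 \<le> u (Suc i) - u i" using g0le i Nn by simp
    ultimately show "w i < w (Suc i)" unfolding \<rho>_def by linarith
  qed
  have "psum q G u N - psum q G w N \<le> (\<Sum>i<N. e / N)"
    unfolding psum_def sum_subtractf[symmetric]
  proof (rule sum_mono)
    fix i assume "i \<in> {..<N}"
    then have iN: "i < N" by simp
    have inS: "(u i, u (Suc i)) \<in> simplex2 T" "(w i, w (Suc i)) \<in> simplex2 T"
      using ispart_range[OF u, of i] ispart_range[OF u, of "Suc i"] ispart_mono[OF u, of i "Suc i"]
        ispart_range[OF w, of i] ispart_range[OF w, of "Suc i"] ispart_mono[OF w, of i "Suc i"] iN Nn st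
      by (auto simp: simplex2_def)
    have "dist (w i, w (Suc i)) (u i, u (Suc i)) \<le> \<bar>w i - u i\<bar> + \<bar>w (Suc i) - u (Suc i)\<bar>"
      by (rule dist_pair_le)
    also have "\<dots> < \<rho> + \<rho>" using wclose[of i] wclose[of "Suc i"] iN by (intro add_strict_mono) auto
    also have "\<dots> \<le> \<eta>" by (simp add: \<rho>_def)
    finally have "dist (\<phi> (w i, w (Suc i))) (\<phi> (u i, u (Suc i))) < e / N" using \<eta>(2) inS by blast
    then show "norm (G (u i, u (Suc i))) powr q - norm (G (w i, w (Suc i))) powr q \<le> e / N"
      by (simp add: \<phi>_def dist_real_def)
  qed
  also have "\<dots> = e" using \<open>N > 0\<close> by simp
  finally show ?thesis using w lq Nn unfolding w_def by (intro exI[of _ qs]) auto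
qed

lemma VQ_meas:
  fixes Z :: "'a \<Rightarrow> real \<times> real \<Rightarrow> 'e::{real_normed_vector, second_countable_topology}"
  assumes meas: "\<And>s t. (s,t) \<in> simplex2 T \<Longrightarrow> (\<lambda>\<omega>. Z \<omega> (s,t)) \<in> borel_measurable M"
    and cont: "\<And>\<omega>. \<omega> \<in> space M \<Longrightarrow> continuous_on (simplex2 T) (Z \<omega>)"
    and bdd: "\<And>\<omega>. \<omega> \<in> space M \<Longrightarrow> bdd_above (pvar_sums q (Z \<omega>) s t)"
    and st: "(s,t) \<in> simplex2 T" and q: "q > 0"
  shows "(\<lambda>\<omega>. VQ q (Z \<omega>) s t) \<in> borel_measurable M"
proof (cases "s = t")
  case True
  then show ?thesis by (simp add: VQ_def pvar_sums_triv)
next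
  case False
  then have st': "0 \<le> s" "s < t" "t \<le> T" using st by (auto simp: simplex2_def)
  define J where "J = {qs. ispart (rpart s t qs) (Suc (length qs)) s t}"
  define F where "F = (\<lambda>qs \<omega>. psum q (Z \<omega>) (rpart s t qs) (Suc (length qs)))"
  have cJ: "countable J" by (rule countable_subset[OF subset_UNIV]) simp
  have J0: "[] \<in> J" using st' by (simp add: J_def ispart_def rpart_def)
  have FJ: "F qs \<omega> \<in> pvar_sums q (Z \<omega>) s t" if "qs \<in> J" for qs \<omega>
    using that unfolding F_def J_def pvar_sums_eq by blast
  have eq: "VQ q (Z \<omega>) s t = (SUP qs\<in>J. F qs \<omega>)" if \<omega>: "\<omega> \<in> space M" for \<omega>
  proof (rule antisym)
    have bddJ: "bdd_above ((\<lambda>qs. F qs \<omega>) ` J)"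
      using bdd[OF \<omega>] FJ by (meson bdd_above_mono image_subsetI)
    show "VQ q (Z \<omega>) s t \<le> (SUP qs\<in>J. F qs \<omega>)"
      unfolding VQ_def
    proof (rule cSup_least)
      show "pvar_sums q (Z \<omega>) s t \<noteq> {}" using FJ[OF J0] by blast
      fix x assume "x \<in> pvar_sums q (Z \<omega>) s t"
      then obtain u N where u: "ispart u N s t" and xe: "x = psum q (Z \<omega>) u N"
        by (auto simp: pvar_sums_eq)
      show "x \<le> (SUP qs\<in>J. F qs \<omega>)"
      proof (rule field_le_epsilon)
        fix e :: real assume "e > 0"
        obtain qs where qs: "ispart (rpart s t qs) (Suc (length qs)) s t"
          "psum q (Z \<omega>) u N \<le> psum q (Z \<omega>) (rpart s t qs) (Suc (length qs)) + e"
          using approx_rat[OF u st' cont[OF \<omega>] q \<open>e > 0\<close>] by blast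
        have "qs \<in> J" using qs(1) by (simp add: J_def)
        then have "F qs \<omega> \<le> (SUP qs\<in>J. F qs \<omega>)" using bddJ by (intro cSUP_upper)
        then show "x \<le> (SUP qs\<in>J. F qs \<omega>) + e" using qs(2) xe by (simp add: F_def)
      qed
    qed
    show "(SUP qs\<in>J. F qs \<omega>) \<le> VQ q (Z \<omega>) s t"
      unfolding VQ_def
    proof (rule cSUP_least)
      show "J \<noteq> {}" using J0 by blast
      fix qs assume "qs \<in> J"
      then show "F qs \<omega> \<le> Sup (pvar_sums q (Z \<omega>) s t)" using FJ bdd[OF \<omega>] by (intro cSup_upper)
    qed
  qed
  have Fm: "F qs \<in> borel_measurable M" if "qs \<in> J" for qs
  proof -
    have pt: "(rpart s t qs i, rpart s t qs (Suc i)) \<in> simplex2 T" if "i < Suc (length qs)" for i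
      using \<open>qs \<in> J\<close> that ispart_range[of "rpart s t qs" "Suc (length qs)" s t i]
        ispart_range[of "rpart s t qs" "Suc (length qs)" s t "Suc i"]
        ispart_mono[of "rpart s t qs" "Suc (length qs)" s t i "Suc i"] st'
      by (auto simp: J_def simplex2_def)
    show ?thesis
      unfolding F_def psum_def
    proof (rule borel_measurable_sum)
      fix i assume "i \<in> {..<Suc (length qs)}"
      then have m: "(\<lambda>\<omega>. Z \<omega> (rpart s t qs i, rpart s t qs (Suc i))) \<in> borel_measurable M"
        using pt meas by auto
      show "(\<lambda>\<omega>. norm (Z \<omega> (rpart s t qs i, rpart s t qs (Suc i))) powr q) \<in> borel_measurable M"
        using m by measurable
    qed
  qed
  have "(\<lambda>\<omega>. SUP qs\<in>J. F qs \<omega>) \<in> borel_measurable M"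
  proof (rule borel_measurable_cSUP[OF cJ Fm])
    fix \<omega> assume \<omega>: "\<omega> \<in> space M"
    show "bdd_above ((\<lambda>qs. F qs \<omega>) ` J)"
      using bdd[OF \<omega>] FJ by (meson bdd_above_mono image_subsetI)
  qed
  then show ?thesis by (rule measurable_cong[THEN iffD1, rotated]) (simp add: eq)
qed

lemma dense_closed:
  fixes g :: "'b::topological_space \<Rightarrow> 'c::topological_space"
  assumes "continuous_on X g" "D \<subseteq> X" "X \<subseteq> closure D" "closed P" "\<forall>x\<in>D. g x \<in> P"
  shows "\<forall>x\<in>X. g x \<in> P"
proof -
  have "closedin (top_of_set X) (X \<inter> g -` P)"
    using assms(1,4) by (rule continuous_closedin_preimage)
  then obtain C where C: "closed C" "X \<inter> g -` P = X \<inter> C" by (auto simp: closedin_closed)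
  have "D \<subseteq> C" using assms(2,5) C(2) by blast
  then have "closure D \<subseteq> C" using C(1) by (rule closure_minimal)
  then show ?thesis using assms(3) C(2) by blast
qed


lemma ucont_real:
  fixes g :: "real \<Rightarrow> real"
  assumes "compact A" "continuous_on A g" "e > 0"
  shows "\<exists>\<eta>>0. \<forall>a\<in>A. \<forall>b\<in>A. \<bar>a - b\<bar> \<le> \<eta> \<longrightarrow> \<bar>g a - g b\<bar> \<le> e"
proof -
  have "uniformly_continuous_on A g" using assms(2,1) by (rule compact_uniformly_continuous)
  then obtain d where d: "d > 0" "\<forall>x\<in>A. \<forall>x'\<in>A. dist x' x < d \<longrightarrow> dist (g x') (g x) < e"
    unfolding uniformly_continuous_on_def using assms(3) by blast
  show ?thesis
  proof (intro exI[of _ "d/2"] conjI ballI impI)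
    show "d/2 > 0" using d by simp
    fix a b assume "a \<in> A" "b \<in> A" "\<bar>a - b\<bar> \<le> d/2"
    then have "dist (g a) (g b) < e" using d(2) d(1) by (auto simp: dist_real_def)
    then show "\<bar>g a - g b\<bar> \<le> e" by (simp add: dist_real_def)
  qed
qed

lemma fumod_comp:
  fixes F :: "('b::metric_space \<Rightarrow> real) set" and g :: "real \<Rightarrow> real"
  assumes mod: "\<forall>e>0. \<exists>h>0. \<forall>f\<in>F. \<forall>x\<in>S. \<forall>y\<in>S. dist x y \<le> h \<longrightarrow> \<bar>f x - f y\<bar> \<le> e"
    and inA: "\<forall>f\<in>F. \<forall>x\<in>S. f x \<in> A" and A: "compact A" and g: "continuous_on A g"
  shows "\<forall>e>0. \<exists>h>0. \<forall>f\<in>F. \<forall>x\<in>S. \<forall>y\<in>S. dist x y \<le> h \<longrightarrow> \<bar>g (f x) - g (f y)\<bar> \<le> e"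
proof (intro allI impI)
  fix e :: real assume "e > 0"
  obtain \<eta> where \<eta>: "\<eta> > 0" "\<forall>a\<in>A. \<forall>b\<in>A. \<bar>a - b\<bar> \<le> \<eta> \<longrightarrow> \<bar>g a - g b\<bar> \<le> e"
    using ucont_real[OF A g \<open>e > 0\<close>] by blast
  obtain h where h: "h > 0" "\<forall>f\<in>F. \<forall>x\<in>S. \<forall>y\<in>S. dist x y \<le> h \<longrightarrow> \<bar>f x - f y\<bar> \<le> \<eta>"
    using mod \<eta>(1) by blast
  show "\<exists>h>0. \<forall>f\<in>F. \<forall>x\<in>S. \<forall>y\<in>S. dist x y \<le> h \<longrightarrow> \<bar>g (f x) - g (f y)\<bar> \<le> e"
    using h \<eta> inA by blast
qed

lemma continuous_on_powr_const: "q > 0 \<Longrightarrow> continuous_on {0..X} (\<lambda>v::real. v powr q)"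
  by (intro continuous_on_powr' continuous_intros) auto

definition Vfun :: "real \<Rightarrow> (real \<times> real \<Rightarrow> 'e::real_normed_vector) \<Rightarrow> real \<times> real \<Rightarrow> real" where
  "Vfun q G x = VQ q G (fst x) (snd x) powr (1 / q)"

lemma Vfun_eq: "(\<lambda>(s, t). pvar_norm q G s t) = Vfun q G"
  by (auto simp: Vfun_def VQ_def pvar_norm_def fun_eq_iff)

lemma fam_V:
  fixes K1 :: "(real \<times> real \<Rightarrow> 'e::real_normed_vector) set" and T p p' W :: real
  assumes pp: "0 < p" "p < p'" and K1: "compactin (mtopology_of (Cspace (simplex2 T))) K1" and W: "0 \<le> W"
  defines "Fam \<equiv> {G. restrict G (simplex2 T) \<in> K1 \<and> (\<forall>t. 0 \<le> t \<longrightarrow> t \<le> T \<longrightarrow> G (t,t) = 0) \<and>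
                     (\<forall>x\<in>pvar_sums p G 0 T. x \<le> W)}"
  shows "\<exists>Bv. (\<forall>G\<in>Fam. \<forall>x\<in>simplex2 T. \<bar>Vfun p' G x\<bar> \<le> Bv) \<and>
     (\<forall>e>0. \<exists>h>0. \<forall>G\<in>Fam. \<forall>x\<in>simplex2 T. \<forall>y\<in>simplex2 T. dist x y \<le> h \<longrightarrow> \<bar>Vfun p' G x - Vfun p' G y\<bar> \<le> e)"
proof -
  define S where "S = simplex2 T"
  have S: "compact S" by (simp add: S_def compact_simplex)
  obtain B0 where B0: "\<forall>f\<in>K1. \<forall>x\<in>S. norm (f x) \<le> B0"
    using compact_family(1)[OF S K1[folded S_def]] by blast
  have mK: "\<forall>e>0. \<exists>h>0. \<forall>f\<in>K1. \<forall>x\<in>S. \<forall>y\<in>S. dist x y \<le> h \<longrightarrow> dist (f x) (f y) \<le> e"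
    using compact_family(2)[OF S K1[folded S_def]] .
  define B where "B = max B0 0"
  have B0le: "B \<ge> 0" by (simp add: B_def)
  have GB: "norm (G x) \<le> B" if "G \<in> Fam" "x \<in> S" for G x
  proof -
    have "restrict G S \<in> K1" using that by (simp add: Fam_def S_def)
    then have "norm (restrict G S x) \<le> B0" using B0 that(2) by blast
    then show ?thesis using that(2) by (simp add: B_def)
  qed
  have GM: "\<forall>e>0. \<exists>h>0. \<forall>G\<in>Fam. \<forall>x\<in>S. \<forall>y\<in>S. dist x y \<le> h \<longrightarrow> dist (G x) (G y) \<le> e"
  proof (intro allI impI)
    fix e :: real assume "e > 0"
    then obtain h where h: "h > 0" "\<forall>f\<in>K1. \<forall>x\<in>S. \<forall>y\<in>S. dist x y \<le> h \<longrightarrow> dist (f x) (f y) \<le> e"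
      using mK by blast
    have "dist (G x) (G y) \<le> e" if "G \<in> Fam" "x \<in> S" "y \<in> S" "dist x y \<le> h" for G x y
    proof -
      have "restrict G S \<in> K1" using that by (simp add: Fam_def S_def)
      then have "dist (restrict G S x) (restrict G S y) \<le> e" using h(2) that(2-4) by blast
      then show ?thesis using that(2,3) by simp
    qed
    then show "\<exists>h>0. \<forall>G\<in>Fam. \<forall>x\<in>S. \<forall>y\<in>S. dist x y \<le> h \<longrightarrow> dist (G x) (G y) \<le> e"
      using h(1) by blast
  qed
  have Hc: "\<exists>h>0. \<forall>G\<in>Fam. \<forall>a b. 0 \<le> a \<longrightarrow> a \<le> b \<longrightarrow> b \<le> T \<longrightarrow> b - a \<le> h \<longrightarrow> norm (G (a,b)) \<le> c"
    if "c > 0" for c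
  proof -
    obtain h where h: "h > 0" "\<forall>G\<in>Fam. \<forall>x\<in>S. \<forall>y\<in>S. dist x y \<le> h \<longrightarrow> dist (G x) (G y) \<le> c"
      using GM \<open>c > 0\<close> by blast
    have "norm (G (a,b)) \<le> c" if "G \<in> Fam" "0 \<le> a" "a \<le> b" "b \<le> T" "b - a \<le> h" for G a b
    proof -
      have "(a,b) \<in> S" "(b,b) \<in> S" using that by (auto simp: S_def simplex2_def)
      moreover have "dist (a,b) (b,b) \<le> h" using that by (simp add: dist_pair_fst dist_real_def)
      ultimately have "dist (G (a,b)) (G (b,b)) \<le> c" using h(2) that(1) by blast
      moreover have "G (b,b) = 0" using that by (auto simp: Fam_def)
      ultimately show ?thesis by simp
    qed
    then show ?thesis using h(1) by blast
  qed
  have Hd: "\<exists>h>0. \<forall>G\<in>Fam. \<forall>x y. x \<in> S \<longrightarrow> y \<in> S \<longrightarrow> dist x y \<le> h \<longrightarrow>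
                 \<bar>norm (G x) powr p' - norm (G y) powr p'\<bar> \<le> d" if "d > 0" for d
  proof -
    have "compact {0..B}" by simp
    moreover have "continuous_on {0..B} (\<lambda>v. v powr p')" using pp by (intro continuous_on_powr_const) auto
    ultimately obtain \<eta> where \<eta>: "\<eta> > 0" "\<forall>a\<in>{0..B}. \<forall>b\<in>{0..B}. \<bar>a - b\<bar> \<le> \<eta> \<longrightarrow> \<bar>a powr p' - b powr p'\<bar> \<le> d"
      using ucont_real[of "{0..B}" "\<lambda>v. v powr p'" d] \<open>d > 0\<close> by blast
    obtain h where h: "h > 0" "\<forall>G\<in>Fam. \<forall>x\<in>S. \<forall>y\<in>S. dist x y \<le> h \<longrightarrow> dist (G x) (G y) \<le> \<eta>"
      using GM \<eta>(1) by blast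
    have "\<bar>norm (G x) powr p' - norm (G y) powr p'\<bar> \<le> d"
      if "G \<in> Fam" "x \<in> S" "y \<in> S" "dist x y \<le> h" for G x y
    proof -
      have "\<bar>norm (G x) - norm (G y)\<bar> \<le> dist (G x) (G y)"
        by (simp add: dist_norm norm_triangle_ineq3)
      also have "\<dots> \<le> \<eta>" using h(2) that by blast
      finally show ?thesis using \<eta>(2) GB[OF that(1,2)] GB[OF that(1,3)] by auto
    qed
    then show ?thesis using h(1) by blast
  qed
  define VQf where "VQf = (\<lambda>(G::real \<times> real \<Rightarrow> 'e) x. VQ p' G (fst x) (snd x))"
  have det: "detset G T p p' B W" if "G \<in> Fam" for G
    using that pp GB by unfold_locales (auto simp: Fam_def S_def)
  have VQrange: "VQf G x \<in> {0..B powr (p' - p) * W}" if "G \<in> Fam" "x \<in> S" for G x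
    using detset.VQ_nonneg[OF det[OF that(1)]] detset.VQ_bound[OF det[OF that(1)]] that(2)
    by (auto simp: VQf_def S_def simplex2_def)
  have UQ: "\<forall>e>0. \<exists>h>0. \<forall>f\<in>VQf ` Fam. \<forall>x\<in>S. \<forall>y\<in>S. dist x y \<le> h \<longrightarrow> \<bar>f x - f y\<bar> \<le> e"
  proof (intro allI impI)
    fix e :: real assume "e > 0"
    define c where "c = (e / (4 * (W + 1))) powr (1 / (p' - p))"
    have cpos: "c > 0" using \<open>e > 0\<close> W by (simp add: c_def)
    have cpow: "c powr (p' - p) = e / (4 * (W + 1))"
      unfolding c_def using \<open>e > 0\<close> W pp by (simp add: powr_powr)
    have cW: "c powr (p' - p) * W \<le> e / 4"
    proof -
      have "c powr (p' - p) * W = e / 4 * (W / (W + 1))" using W by (simp add: cpow field_simps)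
      also have "\<dots> \<le> e / 4 * 1" using W \<open>e > 0\<close> by (intro mult_left_mono) auto
      finally show ?thesis by simp
    qed
    obtain h1 where h1: "h1 > 0" "\<forall>G\<in>Fam. \<forall>a b. 0 \<le> a \<longrightarrow> a \<le> b \<longrightarrow> b \<le> T \<longrightarrow> b - a \<le> h1 \<longrightarrow> norm (G (a,b)) \<le> c"
      using Hc[OF cpos] by blast
    obtain h2 where h2: "h2 > 0" "\<forall>G\<in>Fam. \<forall>x y. x \<in> S \<longrightarrow> y \<in> S \<longrightarrow> dist x y \<le> h2 \<longrightarrow>
                 \<bar>norm (G x) powr p' - norm (G y) powr p'\<bar> \<le> e / 4"
      using Hd[of "e/4"] \<open>e > 0\<close> by auto
    define h where "h = min h1 h2"
    have "\<bar>VQf G x - VQf G y\<bar> \<le> e" if "G \<in> Fam" "x \<in> S" "y \<in> S" "dist x y \<le> h" for G x y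
    proof -
      have "\<bar>VQf G x - VQf G y\<bar> \<le> 2 * (c powr (p' - p) * W + e / 4)"
        unfolding VQf_def
      proof (rule detset.VQ_mod[OF det[OF that(1)], of h c "e/4"])
        show "\<And>a b. 0 \<le> a \<Longrightarrow> a \<le> b \<Longrightarrow> b \<le> T \<Longrightarrow> b - a \<le> h \<Longrightarrow> norm (G (a, b)) \<le> c"
          using h1(2) that(1) unfolding h_def by auto
        show "\<And>x y. x \<in> simplex2 T \<Longrightarrow> y \<in> simplex2 T \<Longrightarrow> dist x y \<le> h \<Longrightarrow>
                 \<bar>norm (G x) powr p' - norm (G y) powr p'\<bar> \<le> e / 4"
          using h2(2) that(1) unfolding h_def S_def by auto
        show "0 \<le> c" using cpos by simp
        show "0 \<le> e / 4" using \<open>e > 0\<close> by simp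
        show "x \<in> simplex2 T" "y \<in> simplex2 T" "dist x y \<le> h" using that by (auto simp: S_def)
      qed
      also have "\<dots> \<le> e" using cW by simp
      finally show ?thesis .
    qed
    moreover have "h > 0" using h1 h2 by (simp add: h_def)
    ultimately show "\<exists>h>0. \<forall>f\<in>VQf ` Fam. \<forall>x\<in>S. \<forall>y\<in>S. dist x y \<le> h \<longrightarrow> \<bar>f x - f y\<bar> \<le> e"
      by blast
  qed
  have UV: "\<forall>e>0. \<exists>h>0. \<forall>f\<in>VQf ` Fam. \<forall>x\<in>S. \<forall>y\<in>S. dist x y \<le> h \<longrightarrow>
             \<bar>f x powr (1/p') - f y powr (1/p')\<bar> \<le> e"
    by (rule fumod_comp[OF UQ, where A="{0..B powr (p' - p) * W}"])
      (use VQrange pp in \<open>auto intro: continuous_on_powr_const\<close>)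
  show ?thesis
  proof (intro exI[of _ "(B powr (p' - p) * W) powr (1/p')"] conjI)
    show "\<forall>G\<in>Fam. \<forall>x\<in>simplex2 T. \<bar>Vfun p' G x\<bar> \<le> (B powr (p' - p) * W) powr (1 / p')"
    proof (intro ballI)
      fix G x assume "G \<in> Fam" "x \<in> simplex2 T"
      then have r: "VQf G x \<in> {0..B powr (p' - p) * W}" using VQrange by (simp add: S_def)
      then show "\<bar>Vfun p' G x\<bar> \<le> (B powr (p' - p) * W) powr (1 / p')"
        using pp unfolding Vfun_def VQf_def by (auto intro: powr_mono2)
    qed
    show "\<forall>e>0. \<exists>h>0. \<forall>G\<in>Fam. \<forall>x\<in>simplex2 T. \<forall>y\<in>simplex2 T. dist x y \<le> h \<longrightarrow> \<bar>Vfun p' G x - Vfun p' G y\<bar> \<le> e"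
      using UV unfolding S_def Vfun_def VQf_def by auto
  qed
qed


lemma Cspace_mcomplete:
  "Metric_space.mcomplete (mspace (Cspace S)) (mdist (Cspace S :: ((real \<times> real) \<Rightarrow> real) metric))"
proof -
  have "Met_TC.mcomplete TYPE(real)" by (simp add: complete_UNIV)
  then have "mcomplete_of (cfunspace (top_of_set S) (Met_TC.Self :: real metric))"
    by (rule Met_TC.mcomplete_cfunspace)
  moreover have "(Met_TC.Self :: real metric) = euclidean_metric"
    by (simp add: Met_TC.Self_def euclidean_metric_def)
  ultimately show ?thesis by (simp add: mcomplete_of_def Cspace_def)
qed

lemma round_close: "\<bar>of_int (round x) - x\<bar> \<le> 1/2" for x :: real
  using of_int_round_ge[of x] of_int_round_le[of x] by linarith

lemma AA_compact:
  fixes S :: "(real \<times> real) set" and B :: real and \<delta> :: "nat \<Rightarrow> real"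
  assumes S: "compact S" and \<delta>: "\<And>k. \<delta> k > 0"
  defines "K \<equiv> {f \<in> mspace (Cspace S). (\<forall>x\<in>S. \<bar>f x\<bar> \<le> B) \<and>
              (\<forall>k. \<forall>x\<in>S. \<forall>y\<in>S. dist x y < \<delta> k \<longrightarrow> \<bar>f x - f y\<bar> \<le> 1 / real (Suc k))}"
  shows "compactin (mtopology_of (Cspace S)) K"
proof -
  interpret C: Metric_space "mspace (Cspace S)" "mdist (Cspace S)" by simp
  have KM: "K \<subseteq> mspace (Cspace S)" by (auto simp: K_def)
  have closed: "closedin C.mtopology K"
    unfolding C.metric_closedin_iff_sequentially_closed
  proof (intro conjI allI impI KM)
    fix \<sigma> l assume a: "range \<sigma> \<subseteq> K \<and> limitin C.mtopology \<sigma> l sequentially"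
    then have lM: "l \<in> mspace (Cspace S)"
      and ev: "\<And>\<epsilon>. \<epsilon> > 0 \<Longrightarrow> eventually (\<lambda>n. \<sigma> n \<in> mspace (Cspace S) \<and> mdist (Cspace S) (\<sigma> n) l < \<epsilon>) sequentially"
      unfolding C.limitin_metric by blast+
    have \<sigma>K: "\<sigma> n \<in> K" for n using a by blast
    have lim: "(\<lambda>n. \<sigma> n x) \<longlonglongrightarrow> l x" if "x \<in> S" for x
    proof (rule tendstoI)
      fix \<epsilon> :: real assume "\<epsilon> > 0"
      show "eventually (\<lambda>n. dist (\<sigma> n x) (l x) < \<epsilon>) sequentially"
        using ev[OF \<open>\<epsilon> > 0\<close>]
      proof (rule eventually_mono)
        fix n assume "\<sigma> n \<in> mspace (Cspace S) \<and> mdist (Cspace S) (\<sigma> n) l < \<epsilon>"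
        then show "dist (\<sigma> n x) (l x) < \<epsilon>" using Cspace_dist_lt[OF S _ lM _ that] by blast
      qed
    qed
    have "\<bar>l x\<bar> \<le> B" if "x \<in> S" for x
    proof (rule LIMSEQ_le_const2)
      show "(\<lambda>n. \<bar>\<sigma> n x\<bar>) \<longlonglongrightarrow> \<bar>l x\<bar>" using lim[OF that] by (rule tendsto_rabs)
      show "\<exists>N. \<forall>n\<ge>N. \<bar>\<sigma> n x\<bar> \<le> B" using \<sigma>K that by (auto simp: K_def)
    qed
    moreover have "\<bar>l x - l y\<bar> \<le> 1 / real (Suc k)"
      if "x \<in> S" "y \<in> S" "dist x y < \<delta> k" for k x y
    proof (rule LIMSEQ_le_const2)
      show "(\<lambda>n. \<bar>\<sigma> n x - \<sigma> n y\<bar>) \<longlonglongrightarrow> \<bar>l x - l y\<bar>"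
        using lim[OF that(1)] lim[OF that(2)] by (intro tendsto_rabs tendsto_diff)
      show "\<exists>N. \<forall>n\<ge>N. \<bar>\<sigma> n x - \<sigma> n y\<bar> \<le> 1 / real (Suc k)" using \<sigma>K that by (auto simp: K_def)
    qed
    ultimately show "l \<in> K" using lM by (auto simp: K_def)
  qed
  have tb: "C.mtotally_bounded K"
    unfolding C.mtotally_bounded_def
  proof (intro allI impI)
    fix \<epsilon> :: real assume "\<epsilon> > 0"
    define \<gamma> where "\<gamma> = \<epsilon> / 4"
    have \<gamma>: "\<gamma> > 0" using \<open>\<epsilon> > 0\<close> by (simp add: \<gamma>_def)
    obtain k where k: "inverse (real (Suc k)) < \<gamma>" using reals_Archimedean[OF \<gamma>] by blast
    obtain F where F: "F \<subseteq> S" "finite F" "S \<subseteq> (\<Union>c\<in>F. ball c (\<delta> k))"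
    proof (rule compactE_image[OF S, of S "\<lambda>c. ball c (\<delta> k)"])
      show "S \<subseteq> (\<Union>c\<in>S. ball c (\<delta> k))" using \<delta>[of k] by force
    qed auto
    define cod where "cod = (\<lambda>f::real \<times> real \<Rightarrow> real. restrict (\<lambda>j. round (f j / \<gamma>)) F)"
    define m where "m = \<lceil>B / \<gamma>\<rceil> + 1"
    have codP: "cod f \<in> Pi\<^sub>E F (\<lambda>_. {-m..m})" if "f \<in> K" for f
    proof -
      have "round (f j / \<gamma>) \<in> {-m..m}" if "j \<in> F" for j
      proof -
        have fj: "\<bar>f j\<bar> \<le> B" using \<open>f \<in> K\<close> that F(1) by (auto simp: K_def)
        have "\<bar>f j / \<gamma>\<bar> \<le> B / \<gamma>" using fj \<gamma> by (simp add: abs_divide divide_right_mono)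
        moreover have "B / \<gamma> \<le> of_int \<lceil>B / \<gamma>\<rceil>" by (rule le_of_int_ceiling)
        ultimately have "\<bar>real_of_int (round (f j / \<gamma>))\<bar> \<le> real_of_int m"
          using round_close[of "f j / \<gamma>"] unfolding m_def by linarith
        then have "\<bar>round (f j / \<gamma>)\<bar> \<le> m" by linarith
        then show ?thesis by auto
      qed
      then show ?thesis by (auto simp: cod_def)
    qed
    have fin: "finite (cod ` K)"
      by (rule finite_subset[OF _ finite_PiE[OF F(2), of "\<lambda>_. {-m..m}"]]) (use codP in auto)
    define rep where "rep = (\<lambda>\<phi>. SOME g. g \<in> K \<and> cod g = \<phi>)"
    have rep: "rep (cod f) \<in> K \<and> cod (rep (cod f)) = cod f" if "f \<in> K" for f
      unfolding rep_def by (rule someI[of "\<lambda>g. g \<in> K \<and> cod g = cod f" f]) (use that in simp)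
    show "\<exists>N. finite N \<and> N \<subseteq> K \<and> K \<subseteq> (\<Union>x\<in>N. C.mball x \<epsilon>)"
    proof (intro exI[of _ "rep ` cod ` K"] conjI)
      show "finite (rep ` cod ` K)" using fin by simp
      show "rep ` cod ` K \<subseteq> K" using rep by blast
      show "K \<subseteq> (\<Union>x\<in>rep ` cod ` K. C.mball x \<epsilon>)"
      proof
        fix f assume f: "f \<in> K"
        define g where "g = rep (cod f)"
        have gK: "g \<in> K" and cg: "cod g = cod f" using rep[OF f] by (auto simp: g_def)
        have fM: "f \<in> mspace (Cspace S)" and gM: "g \<in> mspace (Cspace S)" using f gK KM by auto
        have pt: "dist (g x) (f x) \<le> 3 * \<gamma>" if xS: "x \<in> S" for x
        proof -
          obtain j where j: "j \<in> F" "x \<in> ball j (\<delta> k)" using F(3) xS by blast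
          have jS: "j \<in> S" using j F(1) by auto
          have dxj: "dist x j < \<delta> k" using j(2) by (simp add: dist_commute)
          have r: "round (f j / \<gamma>) = round (g j / \<gamma>)"
            using fun_cong[OF cg, of j] j(1) by (simp add: cod_def)
          have "\<bar>f j / \<gamma> - g j / \<gamma>\<bar> \<le> 1"
            using round_close[of "f j / \<gamma>"] round_close[of "g j / \<gamma>"] r by linarith
          then have "\<bar>f j - g j\<bar> / \<gamma> \<le> 1" using \<gamma> by (simp add: diff_divide_distrib[symmetric] abs_divide)
          then have 1: "\<bar>f j - g j\<bar> \<le> \<gamma>" using \<gamma> by (simp add: divide_le_eq)
          have "1 / real (Suc k) < \<gamma>" using k by (simp add: inverse_eq_divide)
          then have 2: "\<bar>f x - f j\<bar> \<le> \<gamma>" "\<bar>g x - g j\<bar> \<le> \<gamma>"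
            using f gK xS jS dxj unfolding K_def by fastforce+
          show ?thesis using 1 2 by (simp add: dist_real_def)
        qed
        have "mdist (Cspace S) g f \<le> 3 * \<gamma>"
          unfolding Cspace_def by (rule mdist_cfunspace_le) (use \<gamma> pt in auto)
        then have "mdist (Cspace S) g f < \<epsilon>" using \<gamma> by (simp add: \<gamma>_def)
        moreover have "g \<in> rep ` cod ` K" using f by (simp add: g_def)
        ultimately show "f \<in> (\<Union>x\<in>rep ` cod ` K. C.mball x \<epsilon>)" using fM gM by auto
      qed
    qed
  qed
  have "compactin C.mtopology (C.mtopology closure_of K)"
    using C.mtotally_bounded_eq_compact_closure_of[OF Cspace_mcomplete] tb by blast
  then show ?thesis using closed by (simp add: closure_of_closedin mtopology_of_def)
qed


lemma fumod_imp_cont: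
  fixes f :: "'b::metric_space \<Rightarrow> real"
  assumes "\<forall>e>0. \<exists>h>0. \<forall>x\<in>S. \<forall>y\<in>S. dist x y \<le> h \<longrightarrow> \<bar>f x - f y\<bar> \<le> e"
  shows "continuous_on S f"
  unfolding continuous_on_iff
proof (intro ballI allI impI)
  fix x e assume "x \<in> S" "(e::real) > 0"
  then obtain h where h: "h > 0" "\<forall>x\<in>S. \<forall>y\<in>S. dist x y \<le> h \<longrightarrow> \<bar>f x - f y\<bar> \<le> e / 2"
    using assms[rule_format, of "e/2"] by auto
  show "\<exists>d>0. \<forall>x'\<in>S. dist x' x < d \<longrightarrow> dist (f x') (f x) < e"
  proof (intro exI[of _ h] conjI ballI impI h(1))
    fix x' assume "x' \<in> S" "dist x' x < h"
    then have "\<bar>f x' - f x\<bar> \<le> e / 2" using h(2) \<open>x \<in> S\<close> by auto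
    then show "dist (f x') (f x) < e" using \<open>e > 0\<close> by (simp add: dist_real_def)
  qed
qed

lemma single_G:
  fixes G :: "real \<times> real \<Rightarrow> 'e::real_normed_vector"
  assumes pp0: "0 < p" "p < p'" and cont: "continuous_on (simplex2 T) G"
    and diag: "\<forall>t. 0 \<le> t \<longrightarrow> t \<le> T \<longrightarrow> G (t,t) = 0" and fin: "finite_pvar p G 0 T"
  shows "continuous_on (simplex2 T) (Vfun p' G)"
    and "\<forall>s t. (s,t) \<in> simplex2 T \<longrightarrow> bdd_above (pvar_sums p' G s t)"
proof -
  have "bounded (G ` simplex2 T)"
    by (rule compact_imp_bounded[OF compact_continuous_image[OF cont compact_simplex]])
  then obtain B where B: "\<And>x. x \<in> simplex2 T \<Longrightarrow> norm (G x) \<le> B" by (auto simp: bounded_iff)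
  define W where "W = max (Sup (pvar_sums p G 0 T)) 0"
  have W: "x \<le> W" if "x \<in> pvar_sums p G 0 T" for x
  proof -
    have "x \<le> Sup (pvar_sums p G 0 T)" using fin that by (auto simp: finite_pvar_def intro: cSup_upper)
    then show ?thesis by (simp add: W_def)
  qed
  have W0: "0 \<le> W" by (simp add: W_def)
  have dt: "detset G T p p' B W"
    unfolding detset_def using pp0 B W by auto
  interpret detset G T p p' B W by (rule dt)
  show "\<forall>s t. (s,t) \<in> simplex2 T \<longrightarrow> bdd_above (pvar_sums p' G s t)"
    using sums_bdd by (auto simp: simplex2_def)
  define K1 where "K1 = {restrict G (simplex2 T)}"
  have "restrict G (simplex2 T) \<in> mspace (Cspace (simplex2 T))"
  proof -
    have "continuous_on (simplex2 T) (restrict G (simplex2 T)) \<longleftrightarrow> continuous_on (simplex2 T) G"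
      by (rule continuous_on_cong) auto
    then have "continuous_on (simplex2 T) (restrict G (simplex2 T))" using cont by simp
    moreover have "restrict G (simplex2 T) ` simplex2 T = G ` simplex2 T" by auto
    ultimately show ?thesis using \<open>bounded (G ` simplex2 T)\<close> by (simp add: Cspace_mem)
  qed
  then have K1: "compactin (mtopology_of (Cspace (simplex2 T))) K1" by (simp add: K1_def)
  have
    mod: "\<forall>e>0. \<exists>h>0. \<forall>G\<in>{G. restrict G (simplex2 T) \<in> K1 \<and> (\<forall>t. 0 \<le> t \<longrightarrow> t \<le> T \<longrightarrow> G (t,t) = 0) \<and>
                     (\<forall>x\<in>pvar_sums p G 0 T. x \<le> W)}.
       \<forall>x\<in>simplex2 T. \<forall>y\<in>simplex2 T. dist x y \<le> h \<longrightarrow> \<bar>Vfun p' G x - Vfun p' G y\<bar> \<le> e"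
    using fam_V[OF pp0 K1 W0] by (elim exE conjE)
  have "G \<in> {G. restrict G (simplex2 T) \<in> K1 \<and> (\<forall>t. 0 \<le> t \<longrightarrow> t \<le> T \<longrightarrow> G (t,t) = 0) \<and>
                     (\<forall>x\<in>pvar_sums p G 0 T. x \<le> W)}"
    using diag W by (simp add: K1_def)
  then have "\<forall>e>0. \<exists>h>0. \<forall>x\<in>simplex2 T. \<forall>y\<in>simplex2 T. dist x y \<le> h \<longrightarrow> \<bar>Vfun p' G x - Vfun p' G y\<bar> \<le> e"
    using mod by (simp add: Ball_def) (meson)
  then show "continuous_on (simplex2 T) (Vfun p' G)" by (rule fumod_imp_cont)
qed


lemma pvar_norm_Vfun: "pvar_norm q G s t = Vfun q G (s, t)"
  by (simp add: Vfun_def VQ_def pvar_norm_def)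

lemma Vfun_diag: "Vfun q G (s, s) = 0"
  by (simp add: Vfun_def VQ_def pvar_sums_triv)

lemma meas_set_le:
  assumes "countable D" "\<And>x. x \<in> D \<Longrightarrow> g x \<in> borel_measurable M"
  shows "{\<omega> \<in> space M. \<forall>x\<in>D. g x \<omega> \<le> (c::real)} \<in> sets M"
proof (rule sets.sets_Collect_countable_All'[OF _ assms(1)])
  fix x assume "x \<in> D"
  show "{\<omega> \<in> space M. g x \<omega> \<le> c} \<in> sets M"
    using borel_measurable_le[OF assms(2)[OF \<open>x \<in> D\<close>] borel_measurable_const[of c M]] by simp
qed

lemma dense_le_equiv:
  fixes g :: "'b::topological_space \<Rightarrow> real"
  assumes "continuous_on X g" "D \<subseteq> X" "X \<subseteq> closure D"
  shows "(\<forall>x\<in>X. g x \<le> c) \<longleftrightarrow> (\<forall>x\<in>D. g x \<le> c)"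
proof
  assume "\<forall>x\<in>D. g x \<le> c"
  then have "\<forall>x\<in>D. g x \<in> {..c}" by simp
  then have "\<forall>x\<in>X. g x \<in> {..c}" using dense_closed[OF assms closed_atMost] by blast
  then show "\<forall>x\<in>X. g x \<le> c" by simp
qed (use assms(2) in blast)

lemma prob_Int_ge:
  assumes "prob_space M" "A \<in> sets M" "B \<in> sets M" "measure M A \<ge> 1 - a" "measure M B \<ge> 1 - b"
  shows "measure M (A \<inter> B) \<ge> 1 - a - b"
proof -
  interpret prob_space M by (rule assms(1))
  have "measure M (A \<union> B) = measure M A + measure M B - measure M (A \<inter> B)"
    using assms(2,3) by (intro measure_Un3) (simp_all add: fmeasurable_eq_sets)
  moreover have "measure M (A \<union> B) \<le> 1" using prob_le_1 by simp
  ultimately show ?thesis using assms(4,5) by linarith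
qed

lemma pos_meas_sets: "measure M A > 0 \<Longrightarrow> A \<in> sets M"
  using measure_notin_sets by fastforce


theorem lemma21:
  fixes T p :: real
    and M :: "nat \<Rightarrow> 'a measure"
    and Z :: "nat \<Rightarrow> 'a \<Rightarrow> real \<times> real \<Rightarrow> 'e::{banach, second_countable_topology}"
  assumes p: "p \<ge> 1"
    and prob: "\<And>n. prob_space (M n)"
    and meas: "\<And>n s t. (s, t) \<in> simplex2 T \<Longrightarrow> (\<lambda>\<omega>. Z n \<omega> (s, t)) \<in> borel_measurable (M n)"
    and cont: "\<And>n \<omega>. \<omega> \<in> space (M n) \<Longrightarrow> continuous_on (simplex2 T) (Z n \<omega>)"
    and diag: "\<And>n \<omega> t. \<omega> \<in> space (M n) \<Longrightarrow> 0 \<le> t \<Longrightarrow> t \<le> T \<Longrightarrow> Z n \<omega> (t, t) = 0"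
    and finvar: "\<And>n \<omega>. \<omega> \<in> space (M n) \<Longrightarrow> finite_pvar p (Z n \<omega>) 0 T"
    and tightZ: "tight_C M (simplex2 T) Z"
    and tightV: "tight_R M (\<lambda>n \<omega>. pvar_norm p (Z n \<omega>) 0 T)"
  shows "\<forall>p'>p.
     (\<forall>n. \<forall>\<omega>\<in>space (M n). continuous_on (simplex2 T) (\<lambda>(s, t). pvar_norm p' (Z n \<omega>) s t)) \<and>
     tight_C M (simplex2 T) (\<lambda>n \<omega> (s, t). pvar_norm p' (Z n \<omega>) s t) \<and>
     (\<forall>\<epsilon>>0. \<exists>\<delta>>0. \<forall>n.
        measure (M n) {\<omega> \<in> space (M n).
           \<forall>(s, t) \<in> simplex2 T. t - s \<le> \<delta> \<longrightarrow> pvar_norm p' (Z n \<omega>) s t \<le> \<epsilon>} > 1 - \<epsilon>)"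
proof (intro allI impI)
  fix p' :: real assume pp': "p < p'"
  define S where "S = simplex2 T"
  have pp: "0 < p" "p < p'" using p pp' by auto
  have cS: "compact S" by (simp add: S_def compact_simplex)
  have diag': "\<forall>t. 0 \<le> t \<longrightarrow> t \<le> T \<longrightarrow> Z n \<omega> (t,t) = 0" if "\<omega> \<in> space (M n)" for n \<omega>
    using diag[OF that] by blast
  have contV: "continuous_on S (Vfun p' (Z n \<omega>))" if "\<omega> \<in> space (M n)" for n \<omega>
    using single_G(1)[OF pp cont[OF that] diag'[OF that] finvar[OF that]] by (simp add: S_def)
  have bddV: "bdd_above (pvar_sums p' (Z n \<omega>) s t)" if "\<omega> \<in> space (M n)" "(s,t) \<in> S" for n \<omega> s t
    using single_G(2)[OF pp cont[OF that(1)] diag'[OF that(1)] finvar[OF that(1)]] that(2) by (simp add: S_def)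
  have measV: "(\<lambda>\<omega>. Vfun p' (Z n \<omega>) x) \<in> borel_measurable (M n)" if "x \<in> S" for n x
  proof -
    obtain s t where x: "x = (s,t)" by (cases x)
    have "(\<lambda>\<omega>. VQ p' (Z n \<omega>) s t) \<in> borel_measurable (M n)"
      by (rule VQ_meas[where T=T and M="M n" and Z="Z n"]) (use meas cont bddV that x pp in \<open>auto simp: S_def\<close>)
    then show ?thesis unfolding Vfun_def x fst_conv snd_conv
      by (rule powr_real_measurable) simp
  qed
  have good: "\<exists>Bv A. (\<forall>n. A n \<in> sets (M n) \<and> 1 - \<eta> \<le> measure (M n) (A n) \<and> A n \<subseteq> space (M n)) \<and>
      (\<forall>n. \<forall>\<omega>\<in>A n. \<forall>x\<in>S. \<bar>Vfun p' (Z n \<omega>) x\<bar> \<le> Bv) \<and>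
      (\<forall>e>0. \<exists>h>0. \<forall>n. \<forall>\<omega>\<in>A n. \<forall>x\<in>S. \<forall>y\<in>S. dist x y \<le> h \<longrightarrow>
          \<bar>Vfun p' (Z n \<omega>) x - Vfun p' (Z n \<omega>) y\<bar> \<le> e)"
    if \<eta>: "0 < \<eta>" "\<eta> < 1" for \<eta>
  proof -
    have \<eta>2: "\<eta> / 2 > 0" using \<eta> by simp
    have "\<exists>K. compactin (mtopology_of (Cspace S)) K \<and>
        (\<forall>n. measure (M n) {\<omega> \<in> space (M n). restrict (Z n \<omega>) S \<in> K} \<ge> 1 - \<eta> / 2)"
      using tightZ \<eta>2 unfolding tight_C_def S_def by blast
    then obtain K1 where K1: "compactin (mtopology_of (Cspace S)) K1"
      and K1m: "\<And>n. measure (M n) {\<omega> \<in> space (M n). restrict (Z n \<omega>) S \<in> K1} \<ge> 1 - \<eta> / 2"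
      by blast
    have "\<exists>K. compact K \<and> (\<forall>n. measure (M n) {\<omega> \<in> space (M n). pvar_norm p (Z n \<omega>) 0 T \<in> K} \<ge> 1 - \<eta> / 2)"
      using tightV \<eta>2 unfolding tight_R_def by blast
    then obtain K2 where K2: "compact K2"
      and K2m: "\<And>n. measure (M n) {\<omega> \<in> space (M n). pvar_norm p (Z n \<omega>) 0 T \<in> K2} \<ge> 1 - \<eta> / 2"
      by blast
    obtain R where R: "R > 0" "\<And>x. x \<in> K2 \<Longrightarrow> \<bar>x\<bar> \<le> R"
      using compact_imp_bounded[OF K2] unfolding bounded_pos by auto
    define W where "W = R powr p"
    have W0: "0 \<le> W" by (simp add: W_def)
    define Fam where "Fam = {G. restrict G (simplex2 T) \<in> K1 \<and> (\<forall>t. 0 \<le> t \<longrightarrow> t \<le> T \<longrightarrow> G (t,t) = 0) \<and>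
                     (\<forall>x\<in>pvar_sums p G 0 T. x \<le> W)}"
    have "\<exists>Bv. (\<forall>G\<in>Fam. \<forall>x\<in>simplex2 T. \<bar>Vfun p' G x\<bar> \<le> Bv) \<and>
     (\<forall>e>0. \<exists>h>0. \<forall>G\<in>Fam. \<forall>x\<in>simplex2 T. \<forall>y\<in>simplex2 T. dist x y \<le> h \<longrightarrow> \<bar>Vfun p' G x - Vfun p' G y\<bar> \<le> e)"
      unfolding Fam_def by (rule fam_V[OF pp K1[unfolded S_def] W0])
    then obtain Bv where Bv: "\<forall>G\<in>Fam. \<forall>x\<in>simplex2 T. \<bar>Vfun p' G x\<bar> \<le> Bv"
      and Vmod: "\<forall>e>0. \<exists>h>0. \<forall>G\<in>Fam. \<forall>x\<in>simplex2 T. \<forall>y\<in>simplex2 T. dist x y \<le> h \<longrightarrow> \<bar>Vfun p' G x - Vfun p' G y\<bar> \<le> e"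
      by (elim exE conjE)
    define A1 where "A1 = (\<lambda>n. {\<omega> \<in> space (M n). restrict (Z n \<omega>) S \<in> K1})"
    define A2 where "A2 = (\<lambda>n. {\<omega> \<in> space (M n). pvar_norm p (Z n \<omega>) 0 T \<in> K2})"
    define A where "A = (\<lambda>n. A1 n \<inter> A2 n)"
    have A1s: "A1 n \<in> sets (M n)" for n
      using K1m[of n] \<eta> unfolding A1_def by (intro pos_meas_sets) linarith
    have A2s: "A2 n \<in> sets (M n)" for n
      using K2m[of n] \<eta> unfolding A2_def by (intro pos_meas_sets) linarith
    have Am: "1 - \<eta> \<le> measure (M n) (A n)" for n
    proof -
      have "1 - \<eta> / 2 \<le> measure (M n) (A1 n)" using K1m[of n] by (simp add: A1_def)
      moreover have "1 - \<eta> / 2 \<le> measure (M n) (A2 n)" using K2m[of n] by (simp add: A2_def)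
      ultimately have "1 - \<eta> / 2 - \<eta> / 2 \<le> measure (M n) (A1 n \<inter> A2 n)"
        by (rule prob_Int_ge[OF prob A1s A2s])
      then show ?thesis by (simp add: A_def)
    qed
    have AFam: "Z n \<omega> \<in> Fam" if "\<omega> \<in> A n" for n \<omega>
    proof -
      have \<omega>: "\<omega> \<in> space (M n)" "restrict (Z n \<omega>) S \<in> K1" "pvar_norm p (Z n \<omega>) 0 T \<in> K2"
        using that by (auto simp: A_def A1_def A2_def)
      have Wb: "x \<le> W" if x: "x \<in> pvar_sums p (Z n \<omega>) 0 T" for x
      proof -
        define \<sigma> where "\<sigma> = Sup (pvar_sums p (Z n \<omega>) 0 T)"
        have x\<sigma>: "x \<le> \<sigma>" unfolding \<sigma>_def using finvar[OF \<omega>(1)] x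
          by (intro cSup_upper) (auto simp: finite_pvar_def)
        have "0 \<le> x" using x by (auto simp: pvar_sums_eq psum_nonneg)
        then have \<sigma>0: "0 \<le> \<sigma>" using x\<sigma> by simp
        have "\<sigma> powr (1/p) \<le> R" using R(2)[OF \<omega>(3)] by (simp add: pvar_norm_def \<sigma>_def)
        then have "(\<sigma> powr (1/p)) powr p \<le> R powr p" using pp by (intro powr_mono2) auto
        moreover have "(\<sigma> powr (1/p)) powr p = \<sigma>" using \<sigma>0 pp by (simp add: powr_powr)
        ultimately show ?thesis using x\<sigma> by (simp add: W_def)
      qed
      show ?thesis using \<omega> diag'[OF \<omega>(1)] Wb by (simp add: Fam_def S_def)
    qed
    have G1: "\<forall>n. A n \<in> sets (M n) \<and> 1 - \<eta> \<le> measure (M n) (A n) \<and> A n \<subseteq> space (M n)"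
      using A1s A2s Am by (auto simp: A_def A1_def)
    have G2: "\<forall>n. \<forall>\<omega>\<in>A n. \<forall>x\<in>S. \<bar>Vfun p' (Z n \<omega>) x\<bar> \<le> Bv"
      using Bv AFam by (auto simp: S_def)
    have G3: "\<forall>e>0. \<exists>h>0. \<forall>n. \<forall>\<omega>\<in>A n. \<forall>x\<in>S. \<forall>y\<in>S. dist x y \<le> h \<longrightarrow>
          \<bar>Vfun p' (Z n \<omega>) x - Vfun p' (Z n \<omega>) y\<bar> \<le> e"
    proof (intro allI impI)
      fix e :: real assume "e > 0"
      then obtain h where h: "h > 0" "\<forall>G\<in>Fam. \<forall>x\<in>simplex2 T. \<forall>y\<in>simplex2 T. dist x y \<le> h \<longrightarrow> \<bar>Vfun p' G x - Vfun p' G y\<bar> \<le> e"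
        using Vmod by blast
      show "\<exists>h>0. \<forall>n. \<forall>\<omega>\<in>A n. \<forall>x\<in>S. \<forall>y\<in>S. dist x y \<le> h \<longrightarrow>
        \<bar>Vfun p' (Z n \<omega>) x - Vfun p' (Z n \<omega>) y\<bar> \<le> e"
        using h AFam unfolding S_def by blast
    qed
    show ?thesis using G1 G2 G3 by blast
  qed
  show "(\<forall>n. \<forall>\<omega>\<in>space (M n). continuous_on (simplex2 T) (\<lambda>(s, t). pvar_norm p' (Z n \<omega>) s t)) \<and>
     tight_C M (simplex2 T) (\<lambda>n \<omega> (s, t). pvar_norm p' (Z n \<omega>) s t) \<and>
     (\<forall>\<epsilon>>0. \<exists>\<delta>>0. \<forall>n.
        measure (M n) {\<omega> \<in> space (M n).
           \<forall>(s, t) \<in> simplex2 T. t - s \<le> \<delta> \<longrightarrow> pvar_norm p' (Z n \<omega>) s t \<le> \<epsilon>} > 1 - \<epsilon>)"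
    (is "?C1 \<and> ?C2 \<and> ?C3")
  proof (intro conjI)
    show ?C1 using contV by (simp add: Vfun_eq S_def)
    show ?C2
      unfolding tight_C_def Vfun_eq S_def[symmetric]
    proof (intro allI impI)
      fix \<epsilon> :: real assume "\<epsilon> > 0"
      define \<eta> where "\<eta> = min \<epsilon> (1/2)"
      have \<eta>: "0 < \<eta>" "\<eta> < 1" "\<eta> \<le> \<epsilon>" using \<open>\<epsilon> > 0\<close> by (auto simp: \<eta>_def)
      obtain Bv A where A: "\<forall>n. A n \<in> sets (M n) \<and> 1 - \<eta> \<le> measure (M n) (A n) \<and> A n \<subseteq> space (M n)"
        and Abd: "\<forall>n. \<forall>\<omega>\<in>A n. \<forall>x\<in>S. \<bar>Vfun p' (Z n \<omega>) x\<bar> \<le> Bv"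
        and Amod: "\<forall>e>0. \<exists>h>0. \<forall>n. \<forall>\<omega>\<in>A n. \<forall>x\<in>S. \<forall>y\<in>S. dist x y \<le> h \<longrightarrow>
          \<bar>Vfun p' (Z n \<omega>) x - Vfun p' (Z n \<omega>) y\<bar> \<le> e"
        using good[OF \<eta>(1,2)] by (elim exE conjE)
      have "\<forall>k. \<exists>h. h > 0 \<and> (\<forall>n. \<forall>\<omega>\<in>A n. \<forall>x\<in>S. \<forall>y\<in>S. dist x y \<le> h \<longrightarrow>
          \<bar>Vfun p' (Z n \<omega>) x - Vfun p' (Z n \<omega>) y\<bar> \<le> 1 / real (Suc k))"
      proof
        fix k
        have "1 / real (Suc k) > 0" by simp
        then show "\<exists>h. h > 0 \<and> (\<forall>n. \<forall>\<omega>\<in>A n. \<forall>x\<in>S. \<forall>y\<in>S. dist x y \<le> h \<longrightarrow>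
          \<bar>Vfun p' (Z n \<omega>) x - Vfun p' (Z n \<omega>) y\<bar> \<le> 1 / real (Suc k))"
          using Amod by blast
      qed
      from choice[OF this] obtain \<delta> where \<delta>0: "\<forall>k. \<delta> k > 0 \<and> (\<forall>n. \<forall>\<omega>\<in>A n. \<forall>x\<in>S. \<forall>y\<in>S. dist x y \<le> \<delta> k \<longrightarrow>
          \<bar>Vfun p' (Z n \<omega>) x - Vfun p' (Z n \<omega>) y\<bar> \<le> 1 / real (Suc k))" by blast
      have \<delta>pos: "\<And>k. \<delta> k > 0" using \<delta>0 by blast
      have \<delta>mod: "\<And>k n \<omega> x y. \<omega> \<in> A n \<Longrightarrow> x \<in> S \<Longrightarrow> y \<in> S \<Longrightarrow> dist x y \<le> \<delta> k \<Longrightarrow>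
          \<bar>Vfun p' (Z n \<omega>) x - Vfun p' (Z n \<omega>) y\<bar> \<le> 1 / real (Suc k)" using \<delta>0 by blast
      define K where "K = {f \<in> mspace (Cspace S). (\<forall>x\<in>S. \<bar>f x\<bar> \<le> Bv) \<and>
              (\<forall>k. \<forall>x\<in>S. \<forall>y\<in>S. dist x y < \<delta> k \<longrightarrow> \<bar>f x - f y\<bar> \<le> 1 / real (Suc k))}"
      have Kc: "compactin (mtopology_of (Cspace S)) K" unfolding K_def by (rule AA_compact[OF cS \<delta>pos])
      show "\<exists>K. compactin (mtopology_of (Cspace S)) K \<and>
          (\<forall>n. 1 - \<epsilon> \<le> measure (M n) {\<omega> \<in> space (M n). restrict (Vfun p' (Z n \<omega>)) S \<in> K})"
      proof (intro exI[of _ K] conjI allI Kc)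
        fix n
        interpret P: prob_space "M n" by (rule prob)
        define V where "V = (\<lambda>\<omega>. Vfun p' (Z n \<omega>))"
        obtain D0 where D0: "countable D0" "D0 \<subseteq> S" "S \<subseteq> closure D0" by (rule separable)
        define Pk where "Pk = (\<lambda>k. {z. fst z \<in> S \<and> snd z \<in> S \<and> dist (fst z) (snd z) < \<delta> k})"
        have "\<forall>k. \<exists>D. countable D \<and> D \<subseteq> Pk k \<and> Pk k \<subseteq> closure D" by (meson separable)
        from choice[OF this] obtain D where D: "\<forall>k. countable (D k) \<and> D k \<subseteq> Pk k \<and> Pk k \<subseteq> closure (D k)"
          by blast
        have memK: "restrict (V \<omega>) S \<in> K \<longleftrightarrow> (\<forall>x\<in>D0. \<bar>V \<omega> x\<bar> \<le> Bv) \<and>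
              (\<forall>k. \<forall>z\<in>D k. \<bar>V \<omega> (fst z) - V \<omega> (snd z)\<bar> \<le> 1 / real (Suc k))"
          if \<omega>: "\<omega> \<in> space (M n)" for \<omega>
        proof -
          have cV: "continuous_on S (V \<omega>)" using contV[OF \<omega>] by (simp add: V_def)
          have "continuous_on S (restrict (V \<omega>) S) \<longleftrightarrow> continuous_on S (V \<omega>)"
            by (rule continuous_on_cong) auto
          moreover have "restrict (V \<omega>) S ` S = V \<omega> ` S" by auto
          moreover have "bounded (V \<omega> ` S)"
            by (rule compact_imp_bounded[OF compact_continuous_image[OF cV cS]])
          ultimately have inM: "restrict (V \<omega>) S \<in> mspace (Cspace S)" using cV by (simp add: Cspace_mem)
          have e1: "(\<forall>x\<in>S. \<bar>V \<omega> x\<bar> \<le> Bv) \<longleftrightarrow> (\<forall>x\<in>D0. \<bar>V \<omega> x\<bar> \<le> Bv)"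
            by (rule dense_le_equiv[OF _ D0(2,3)]) (intro continuous_intros cV)
          have e2: "(\<forall>z\<in>Pk k. \<bar>V \<omega> (fst z) - V \<omega> (snd z)\<bar> \<le> 1 / real (Suc k)) \<longleftrightarrow>
                    (\<forall>z\<in>D k. \<bar>V \<omega> (fst z) - V \<omega> (snd z)\<bar> \<le> 1 / real (Suc k))" for k
          proof (rule dense_le_equiv)
            have c1: "continuous_on (Pk k) (\<lambda>z. V \<omega> (fst z))"
              by (rule continuous_on_compose2[OF cV continuous_on_fst[OF continuous_on_id]]) (auto simp: Pk_def)
            have c2: "continuous_on (Pk k) (\<lambda>z. V \<omega> (snd z))"
              by (rule continuous_on_compose2[OF cV continuous_on_snd[OF continuous_on_id]]) (auto simp: Pk_def)
            show "continuous_on (Pk k) (\<lambda>z. \<bar>V \<omega> (fst z) - V \<omega> (snd z)\<bar>)"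
              by (intro continuous_intros c1 c2)
            show "D k \<subseteq> Pk k" "Pk k \<subseteq> closure (D k)" using D by auto
          qed
          have e3: "(\<forall>x\<in>S. \<forall>y\<in>S. dist x y < \<delta> k \<longrightarrow> \<bar>V \<omega> x - V \<omega> y\<bar> \<le> 1 / real (Suc k)) \<longleftrightarrow>
                    (\<forall>z\<in>Pk k. \<bar>V \<omega> (fst z) - V \<omega> (snd z)\<bar> \<le> 1 / real (Suc k))" for k
            by (auto simp: Pk_def)
          have "restrict (V \<omega>) S \<in> K \<longleftrightarrow> (\<forall>x\<in>S. \<bar>V \<omega> x\<bar> \<le> Bv) \<and>
              (\<forall>k. \<forall>x\<in>S. \<forall>y\<in>S. dist x y < \<delta> k \<longrightarrow> \<bar>V \<omega> x - V \<omega> y\<bar> \<le> 1 / real (Suc k))"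
            unfolding K_def using inM by simp
          then show ?thesis using e1 e2 e3 by simp
        qed
        define E where "E = {\<omega> \<in> space (M n). restrict (V \<omega>) S \<in> K}"
        have Eeq: "E = {\<omega> \<in> space (M n). (\<forall>x\<in>D0. \<bar>V \<omega> x\<bar> \<le> Bv) \<and>
              (\<forall>k. \<forall>z\<in>D k. \<bar>V \<omega> (fst z) - V \<omega> (snd z)\<bar> \<le> 1 / real (Suc k))}"
          unfolding E_def using memK by blast
        have mV: "(\<lambda>\<omega>. V \<omega> x) \<in> borel_measurable (M n)" if "x \<in> S" for x
          using measV[OF that] by (simp add: V_def)
        have Es: "E \<in> sets (M n)"
          unfolding Eeq
        proof (rule sets.sets_Collect_conj)
          show "{\<omega> \<in> space (M n). \<forall>x\<in>D0. \<bar>V \<omega> x\<bar> \<le> Bv} \<in> sets (M n)"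
          proof (rule meas_set_le[OF D0(1)])
            fix x assume "x \<in> D0"
            then have "x \<in> S" using D0(2) by blast
            then show "(\<lambda>\<omega>. \<bar>V \<omega> x\<bar>) \<in> borel_measurable (M n)" using mV by measurable
          qed
          show "{\<omega> \<in> space (M n). \<forall>k. \<forall>z\<in>D k. \<bar>V \<omega> (fst z) - V \<omega> (snd z)\<bar> \<le> 1 / real (Suc k)} \<in> sets (M n)"
          proof (rule sets.sets_Collect_countable_All)
            fix k
            show "{\<omega> \<in> space (M n). \<forall>z\<in>D k. \<bar>V \<omega> (fst z) - V \<omega> (snd z)\<bar> \<le> 1 / real (Suc k)} \<in> sets (M n)"
            proof (rule meas_set_le)
              show "countable (D k)" using D by blast
              fix z assume "z \<in> D k"
              then have "fst z \<in> S" "snd z \<in> S" using D by (auto simp: Pk_def)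
              then show "(\<lambda>\<omega>. \<bar>V \<omega> (fst z) - V \<omega> (snd z)\<bar>) \<in> borel_measurable (M n)"
                using mV by measurable
            qed
          qed
        qed
        have AE: "A n \<subseteq> E"
        proof
          fix \<omega> assume \<omega>: "\<omega> \<in> A n"
          then have \<omega>s: "\<omega> \<in> space (M n)" using A by blast
          have "\<forall>x\<in>D0. \<bar>V \<omega> x\<bar> \<le> Bv" using Abd \<omega> D0(2) by (auto simp: V_def)
          moreover have "\<forall>k. \<forall>z\<in>D k. \<bar>V \<omega> (fst z) - V \<omega> (snd z)\<bar> \<le> 1 / real (Suc k)"
          proof (intro allI ballI)
            fix k z assume "z \<in> D k"
            then have "z \<in> Pk k" using D by blast
            then have "fst z \<in> S" "snd z \<in> S" "dist (fst z) (snd z) \<le> \<delta> k" by (auto simp: Pk_def)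
            then show "\<bar>V \<omega> (fst z) - V \<omega> (snd z)\<bar> \<le> 1 / real (Suc k)"
              using \<delta>mod[OF \<omega>] by (simp add: V_def)
          qed
          ultimately show "\<omega> \<in> E" unfolding Eeq using \<omega>s by blast
        qed
        have "measure (M n) (A n) \<le> measure (M n) E" using AE Es by (rule P.finite_measure_mono)
        moreover have "1 - \<eta> \<le> measure (M n) (A n)" using A by blast
        ultimately show "1 - \<epsilon> \<le> measure (M n) {\<omega> \<in> space (M n). restrict (Vfun p' (Z n \<omega>)) S \<in> K}"
          using \<eta> unfolding E_def V_def by linarith
      qed
    qed
    show ?C3
    proof (intro allI impI)
      fix \<epsilon> :: real assume "\<epsilon> > 0"
      define \<eta> where "\<eta> = min (\<epsilon>/2) (1/2)"
      have \<eta>: "0 < \<eta>" "\<eta> < 1" "\<eta> < \<epsilon>" using \<open>\<epsilon> > 0\<close> by (auto simp: \<eta>_def)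
      obtain Bv A where A: "\<forall>n. A n \<in> sets (M n) \<and> 1 - \<eta> \<le> measure (M n) (A n) \<and> A n \<subseteq> space (M n)"
        and Amod: "\<forall>e>0. \<exists>h>0. \<forall>n. \<forall>\<omega>\<in>A n. \<forall>x\<in>S. \<forall>y\<in>S. dist x y \<le> h \<longrightarrow>
          \<bar>Vfun p' (Z n \<omega>) x - Vfun p' (Z n \<omega>) y\<bar> \<le> e"
        using good[OF \<eta>(1,2)] by (elim exE conjE)
      obtain h where h: "h > 0" "\<forall>n. \<forall>\<omega>\<in>A n. \<forall>x\<in>S. \<forall>y\<in>S. dist x y \<le> h \<longrightarrow>
          \<bar>Vfun p' (Z n \<omega>) x - Vfun p' (Z n \<omega>) y\<bar> \<le> \<epsilon>"
        using Amod \<open>\<epsilon> > 0\<close> by blast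
      show "\<exists>\<delta>>0. \<forall>n. measure (M n) {\<omega> \<in> space (M n).
           \<forall>(s, t) \<in> simplex2 T. t - s \<le> \<delta> \<longrightarrow> pvar_norm p' (Z n \<omega>) s t \<le> \<epsilon>} > 1 - \<epsilon>"
      proof (intro exI[of _ h] conjI allI h(1))
        fix n
        interpret P: prob_space "M n" by (rule prob)
        define V where "V = (\<lambda>\<omega>. Vfun p' (Z n \<omega>))"
        define Sh where "Sh = {x \<in> S. snd x - fst x \<le> h}"
        obtain D' where D': "countable D'" "D' \<subseteq> Sh" "Sh \<subseteq> closure D'" by (rule separable)
        have eq1: "(\<forall>(s, t) \<in> simplex2 T. t - s \<le> h \<longrightarrow> pvar_norm p' (Z n \<omega>) s t \<le> \<epsilon>) \<longleftrightarrow>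
              (\<forall>x\<in>D'. V \<omega> x \<le> \<epsilon>)" if \<omega>: "\<omega> \<in> space (M n)" for \<omega>
        proof -
          have "(\<forall>(s, t) \<in> simplex2 T. t - s \<le> h \<longrightarrow> pvar_norm p' (Z n \<omega>) s t \<le> \<epsilon>) \<longleftrightarrow>
              (\<forall>x\<in>Sh. V \<omega> x \<le> \<epsilon>)"
            by (auto simp: Sh_def S_def V_def pvar_norm_Vfun)
          also have "\<dots> \<longleftrightarrow> (\<forall>x\<in>D'. V \<omega> x \<le> \<epsilon>)"
          proof (rule dense_le_equiv[OF _ D'(2,3)])
            show "continuous_on Sh (V \<omega>)"
              using contV[OF \<omega>] unfolding V_def by (rule continuous_on_subset) (auto simp: Sh_def)
          qed
          finally show ?thesis .
        qed
        define E where "E = {\<omega> \<in> space (M n).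
           \<forall>(s, t) \<in> simplex2 T. t - s \<le> h \<longrightarrow> pvar_norm p' (Z n \<omega>) s t \<le> \<epsilon>}"
        have Eeq: "E = {\<omega> \<in> space (M n). \<forall>x\<in>D'. V \<omega> x \<le> \<epsilon>}"
          unfolding E_def using eq1 by blast
        have Es: "E \<in> sets (M n)"
          unfolding Eeq
        proof (rule meas_set_le[OF D'(1)])
          fix x assume "x \<in> D'"
          then have "x \<in> S" using D'(2) by (auto simp: Sh_def)
          then show "(\<lambda>\<omega>. V \<omega> x) \<in> borel_measurable (M n)" using measV by (simp add: V_def)
        qed
        have AE: "A n \<subseteq> E"
        proof
          fix \<omega> assume \<omega>: "\<omega> \<in> A n"
          then have \<omega>s: "\<omega> \<in> space (M n)" using A by blast
          have "V \<omega> x \<le> \<epsilon>" if "x \<in> D'" for x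
          proof -
            obtain s t where x: "x = (s, t)" by (cases x)
            have xS: "(s,t) \<in> S" "t - s \<le> h" using that D'(2) x by (auto simp: Sh_def)
            then have sS: "(s,s) \<in> S" by (auto simp: S_def simplex2_def)
            have "dist (s,t) (s,s) \<le> h" using xS by (auto simp: dist_pair_snd dist_real_def S_def simplex2_def)
            then have "\<bar>V \<omega> (s,t) - V \<omega> (s,s)\<bar> \<le> \<epsilon>" using h(2) \<omega> xS(1) sS by (auto simp: V_def)
            then show ?thesis by (simp add: x V_def Vfun_diag)
          qed
          then show "\<omega> \<in> E" unfolding Eeq using \<omega>s by blast
        qed
        have "measure (M n) (A n) \<le> measure (M n) E" using AE Es by (rule P.finite_measure_mono)
        moreover have "1 - \<eta> \<le> measure (M n) (A n)" using A by blast
        ultimately show "measure (M n) {\<omega> \<in> space (M n).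
           \<forall>(s, t) \<in> simplex2 T. t - s \<le> h \<longrightarrow> pvar_norm p' (Z n \<omega>) s t \<le> \<epsilon>} > 1 - \<epsilon>"
          using \<eta> unfolding E_def by linarith
      qed
    qed
  qed
qed


end
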